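(* Let $\mathcal{X},\mathcal{Y},\mathcal{Z}$ be sets, $\mathcal{G}$ a measurable space of maps $\mathcal{X}\to\mathcal{Z}$, $\mathcal{H}$ a set of maps $\mathcal{Z}\to\mathbb{R}$, $\ell$ a loss, and fix a within-task online algorithm such that for every $g\in\mathcal{G}$ and every sequence $((x_1,y_1),\dots,(x_m,y_m))\in(\mathcal{X}\times\mathcal{Y})^m$ its average loss $\hat L(g)=\frac1m\sum_{i=1}^m\ell(h_i^g\circ g(x_i),y_i)$ lies in $[0,C]$ and satisfies $\hat L(g)-\inf_{h\in\mathcal{H}}\frac1m\sum_{i=1}^m\ell(h\circ g(x_i),y_i)\le\beta(g,m)$. Let $Q$ be a distribution over distributions on $\mathcal{X}\times\mathcal{Y}$; draw $P_1,\dots,P_T$ i.i.d. from $Q$ and, for each $t$, a sample $(x_{t,i},y_{t,i})_{1\le i\le m}$ i.i.d. from $P_t$. Consider the strategy: (1) run EWA-LL with prior $\pi_1$ and parameter $\eta>0$ on the tasks $t=1,\dots,T$, obtaining $\hat g_1,\dots,\hat g_T$; (2) draw $\mathcal{T}$ uniformly in $\{1,\dots,T\}$ and set $\hat g=\hat g_{\mathcal{T}}$; (3) given a new $P\sim Q$ and a sample $(x_i,y_i)_{1\le i\le m}$ i.i.d. from $P$, run the within-task algorithm with representation $\hat g$ on this sample, obtaining $h_1^{\hat g},\dots,h_m^{\hat g}$; (4) draw $\mathcal{I}$ uniformly in $\{1,\dots,m\}$ and set $\hat h=h^{\hat g}_{\mathcal{I}}$. Let $\mathbb{E}$ denote the expectation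 over all the data, over $P_1,\dots,P_T,P$, over a test pair $(x,y)\sim P$, and over the learner's randomization $(\hat g_t)_t,\mathcal{T},\mathcal{I}$. Then $$\mathbb{E}\big[\ell(\hat h\circ\hat g(x),y)\big]\le\inf_\rho\Bigg\{\mathbb{E}_{g\sim\rho}\Bigg[\mathbb{E}_{P\sim Q}\inf_{h\in\mathcal{H}}\mathbb{E}_{(x,y)\sim P}\big[\ell(h\circ g(x),y)\big]+\beta(g,m)\Bigg]+\frac{\eta C^2}{8}+\frac{\mathcal{K}(\rho,\pi_1)}{\eta T}\Bigg\},$$ the infimum being over all probability measures $\rho$ on $\mathcal{G}$, with $\mathcal{K}$ the Kullback–Leibler divergence.
   Context: Within-task online algorithm: given $g\in\mathcal{G}$ and a sequence $((x_1,y_1),\dots,(x_m,y_m))$, it outputs functions $h_1^g,\dots,h_m^g:\mathcal{Z}\to\mathbb{R}$ where $h_i^g$ depends only on $g$ and $(x_1,y_1),\dots,(x_{i-1},y_{i-1})$; its prediction on $x_i$ is $h_i^g\circ g(x_i)$. The same algorithm is used for every task. EWA-LL on tasks $t=1,\dots,T$: for $t=1,\dots,T$, draw $\hat g_t\sim\pi_t$, run the within-task algorithm on task $t$'s sample with $\hat g_t$, and set $\pi_{t+1}(\mathrm{d}g)\propto\exp(-\eta\hat L_t(g))\pi_t(\mathrm{d}g)$, where $\hat L_t(g)$ is the within-task average loss on task $t$'s sample with representation $g$. Measurability of all maps involved is assumed. *)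

theory Defs
  imports "HOL-Probability.Probability"
begin

text \<open>Samples of size m are functions nat => 'x * 'y, indices 0..m-1 (the paper's 1..m).
  A within-task online algorithm is a map alg g prefix :: 'z => real; the paper's
  h_(i+1)^g is alg g [s_0,...,s_(i-1)], so it depends only on g and the first i pairs.\<close>

definition pref :: "(nat \<Rightarrow> 'a) \<Rightarrow> nat \<Rightarrow> 'a list" where
  "pref S i = map S [0..<i]"

definition avg_loss ::
  "(('x \<Rightarrow> 'z) \<Rightarrow> ('x \<times> 'y) list \<Rightarrow> ('z \<Rightarrow> real)) \<Rightarrow> (real \<Rightarrow> 'y \<Rightarrow> real) \<Rightarrow> nat
    \<Rightarrow> ('x \<Rightarrow> 'z) \<Rightarrow> (nat \<Rightarrow> 'x \<times> 'y) \<Rightarrow> real" where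
  "avg_loss alg l m g S =
     (\<Sum>i<m. l (alg g (pref S i) (g (fst (S i)))) (snd (S i))) / real m"

definition emp_loss ::
  "(real \<Rightarrow> 'y \<Rightarrow> real) \<Rightarrow> nat \<Rightarrow> ('x \<Rightarrow> 'z) \<Rightarrow> ('z \<Rightarrow> real) \<Rightarrow> (nat \<Rightarrow> 'x \<times> 'y) \<Rightarrow> real" where
  "emp_loss l m g h S = (\<Sum>i<m. l (h (g (fst (S i)))) (snd (S i))) / real m"

definition sampleM :: "nat \<Rightarrow> 'a measure \<Rightarrow> (nat \<Rightarrow> 'a) measure" where
  "sampleM m P = PiM {..<m} (\<lambda>_. P)"

text \<open>EWA-LL: ewa pi1 eta L D t is the paper's pi_(t+1) (tasks indexed from 0);
  D t is the sample of task t, L the within-task average loss.\<close>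
fun ewa :: "'g measure \<Rightarrow> real \<Rightarrow> ('g \<Rightarrow> 's \<Rightarrow> real) \<Rightarrow> (nat \<Rightarrow> 's) \<Rightarrow> nat \<Rightarrow> 'g measure" where
  "ewa pi1 eta L D 0 = pi1"
| "ewa pi1 eta L D (Suc t) =
     density (ewa pi1 eta L D t)
       (\<lambda>g. ennreal (exp (- eta * L g (D t)))
            / (\<integral>\<^sup>+ g'. ennreal (exp (- eta * L g' (D t))) \<partial>(ewa pi1 eta L D t)))"

definition KL :: "'a measure \<Rightarrow> 'a measure \<Rightarrow> ereal" where
  "KL rho pr =
     (if absolutely_continuous pr rho \<and> integrable rho (entropy_density (exp 1) pr rho)
      then ereal (KL_divergence (exp 1) pr rho) else \<infinity>)"

text \<open>Expectation of an extended-real valued function: positive part minus negative part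
  (with the ereal convention infinity - infinity = infinity, i.e. undefined expectations
  make the bound vacuous).\<close>
definition ereal_expect :: "'a measure \<Rightarrow> ('a \<Rightarrow> ereal) \<Rightarrow> ereal" where
  "ereal_expect M f =
     enn2ereal (\<integral>\<^sup>+ x. e2ennreal (f x) \<partial>M) - enn2ereal (\<integral>\<^sup>+ x. e2ennreal (- f x) \<partial>M)"

text \<open>Risk of the within-task algorithm run with representation g on a new task:
  E_{P~Q} E_{S~P^m} E_{(x,y)~P} E_{I uniform} l(h_I^g(g x), y).\<close>
definition new_task_risk ::
  "('x \<times> 'y) measure measure \<Rightarrow> (('x \<Rightarrow> 'z) \<Rightarrow> ('x \<times> 'y) list \<Rightarrow> ('z \<Rightarrow> real))
    \<Rightarrow> (real \<Rightarrow> 'y \<Rightarrow> real) \<Rightarrow> nat \<Rightarrow> ('x \<Rightarrow> 'z) \<Rightarrow> ennreal" where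
  "new_task_risk Q alg l m g =
     (\<integral>\<^sup>+ P. (\<integral>\<^sup>+ S. (\<integral>\<^sup>+ z.
        ennreal ((\<Sum>i<m. l (alg g (pref S i) (g (fst z))) (snd z)) / real m)
      \<partial>P) \<partial>sampleM m P) \<partial>Q)"

text \<open>Full expected loss of the meta-strategy: tasks' samples drawn (P_t ~ Q, S_t ~ P_t^m),
  hat g_t ~ pi_t for all t, script T uniform in the T tasks, then new task.\<close>
definition meta_risk ::
  "('x \<times> 'y) measure measure \<Rightarrow> (('x \<Rightarrow> 'z) \<Rightarrow> ('x \<times> 'y) list \<Rightarrow> ('z \<Rightarrow> real))
    \<Rightarrow> (real \<Rightarrow> 'y \<Rightarrow> real) \<Rightarrow> nat \<Rightarrow> nat \<Rightarrow> ('x \<Rightarrow> 'z) measure \<Rightarrow> real \<Rightarrow> ennreal" where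
  "meta_risk Q alg l m T pi1 eta =
     (\<integral>\<^sup>+ D. (\<integral>\<^sup>+ G.
        (\<Sum>t<T. new_task_risk Q alg l m (G t)) / of_nat T
      \<partial>PiM {..<T} (\<lambda>t. ewa pi1 eta (avg_loss alg l m) D t))
      \<partial>PiM {..<T} (\<lambda>_. Q \<bind> (\<lambda>P. sampleM m P)))"

definition oracle_risk ::
  "('x \<times> 'y) measure measure \<Rightarrow> ('z \<Rightarrow> real) set \<Rightarrow> (real \<Rightarrow> 'y \<Rightarrow> real) \<Rightarrow> ('x \<Rightarrow> 'z) \<Rightarrow> ennreal" where
  "oracle_risk Q H l g =
     (\<integral>\<^sup>+ P. (INF h\<in>H. \<integral>\<^sup>+ z. ennreal (l (h (g (fst z))) (snd z)) \<partial>P) \<partial>Q)"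

end

theory Submission
  imports Defs
begin

lemma PiM_marg:
  assumes P: "\<And>j. prob_space (M j)" and fin: "finite I" and i: "i \<in> I"
    and f[measurable]: "f \<in> borel_measurable (M i)"
  shows "(\<integral>\<^sup>+x. f (x i) \<partial>PiM I M) = (\<integral>\<^sup>+y. f y \<partial>M i)"
proof -
  interpret product_prob_space M by (simp add: product_prob_space_def P product_prob_space_axioms_def product_sigma_finite_def prob_space_imp_sigma_finite)
  interpret pp: prob_space "PiM (I - {i}) M" using assms(1) by (intro prob_space_PiM) auto
  have I: "insert i (I - {i}) = I" using i by auto
  have "(\<integral>\<^sup>+x. f (x i) \<partial>PiM I M) = (\<integral>\<^sup>+ y. (\<integral>\<^sup>+ x. f ((x(i := y)) i) \<partial>(Pi\<^sub>M (I - {i}) M)) \<partial>(M i))"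
    using product_nn_integral_insert_rev[of "I - {i}" i "\<lambda>x. f (x i)"] fin i I by simp
  also have "\<dots> = (\<integral>\<^sup>+y. f y \<partial>M i)" by (simp add: pp.emeasure_space_1)
  finally show ?thesis .
qed

lemma PiM_exch:
  assumes P: "prob_space M" and fin: "finite I" and i: "i \<in> I"
    and phi[measurable]: "(\<lambda>(x, z). phi x z) \<in> borel_measurable (PiM I (\<lambda>_. M) \<Otimes>\<^sub>M M)"
    and indep: "\<And>x y z. phi (x(i := y)) z = phi x z"
  shows "(\<integral>\<^sup>+x. phi x (x i) \<partial>PiM I (\<lambda>_. M)) = (\<integral>\<^sup>+x. (\<integral>\<^sup>+z. phi x z \<partial>M) \<partial>PiM I (\<lambda>_. M))"
proof -
  interpret product_prob_space "\<lambda>_. M" by (simp add: product_prob_space_def P product_prob_space_axioms_def product_sigma_finite_def prob_space_imp_sigma_finite)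
  interpret pp: prob_space "PiM (I - {i}) (\<lambda>_. M)" using assms(1) by (intro prob_space_PiM) auto
  interpret M: prob_space M by fact
  interpret pr: pair_sigma_finite "PiM (I - {i}) (\<lambda>_. M)" M
    by (simp add: M.sigma_finite_measure_axioms pair_sigma_finite.intro pp.sigma_finite_measure_axioms)
  have I: "insert i (I - {i}) = I" using i by auto
  obtain c where c: "c \<in> space M" using M.not_empty by blast
  have upd: "(\<lambda>x. x(i := c)) \<in> PiM (I - {i}) (\<lambda>_. M) \<rightarrow>\<^sub>M PiM I (\<lambda>_. M)"
  proof -
    have "(\<lambda>x. (\<lambda>(f, y). f(i := y)) (x, c)) \<in> PiM (I - {i}) (\<lambda>_. M) \<rightarrow>\<^sub>M PiM (insert i (I - {i})) (\<lambda>_. M)"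
      by (rule measurable_compose[OF measurable_Pair[OF measurable_ident_sets[OF refl] measurable_const[OF c]] measurable_add_dim[of i "I - {i}" "\<lambda>_. M"]])
    then show ?thesis using I by simp
  qed
  have m2: "(\<lambda>(x, z). phi x z) \<in> borel_measurable (PiM (I - {i}) (\<lambda>_. M) \<Otimes>\<^sub>M M)"
  proof -
    have "(\<lambda>(x, z). phi (x(i := c)) z) \<in> borel_measurable (PiM (I - {i}) (\<lambda>_. M) \<Otimes>\<^sub>M M)"
      using upd by measurable
    then show ?thesis by (simp add: indep)
  qed
  have m1: "(\<lambda>x. phi x (x i)) \<in> borel_measurable (PiM I (\<lambda>_. M))"
    using i by measurable
  have m3: "(\<lambda>x. \<integral>\<^sup>+z. phi x z \<partial>M) \<in> borel_measurable (PiM I (\<lambda>_. M))"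
    by (rule M.borel_measurable_nn_integral[OF phi])
  have "(\<integral>\<^sup>+x. phi x (x i) \<partial>PiM I (\<lambda>_. M)) = (\<integral>\<^sup>+ y. (\<integral>\<^sup>+ x. phi (x(i := y)) ((x(i := y)) i) \<partial>(Pi\<^sub>M (I - {i}) (\<lambda>_. M))) \<partial>M)"
    using product_nn_integral_insert_rev[of "I - {i}" i "\<lambda>x. phi x (x i)"] fin i I m1 by simp
  also have "\<dots> = (\<integral>\<^sup>+ y. (\<integral>\<^sup>+ x. phi x y \<partial>(Pi\<^sub>M (I - {i}) (\<lambda>_. M))) \<partial>M)"
    by (simp add: indep)
  also have "\<dots> = (\<integral>\<^sup>+ x. (\<integral>\<^sup>+ y. phi x y \<partial>M) \<partial>(Pi\<^sub>M (I - {i}) (\<lambda>_. M)))"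
    using pr.Fubini'[OF m2] by simp
  also have "\<dots> = (\<integral>\<^sup>+ y. (\<integral>\<^sup>+ x. (\<integral>\<^sup>+z. phi (x(i := y)) z \<partial>M) \<partial>(Pi\<^sub>M (I - {i}) (\<lambda>_. M))) \<partial>M)"
    by (simp add: indep M.emeasure_space_1)
  also have "\<dots> = (\<integral>\<^sup>+x. (\<integral>\<^sup>+z. phi x z \<partial>M) \<partial>PiM I (\<lambda>_. M))"
    using product_nn_integral_insert_rev[of "I - {i}" i "\<lambda>x. \<integral>\<^sup>+z. phi x z \<partial>M"] fin i I m3 by simp
  finally show ?thesis .
qed

lemma meas_emeasure_prob_algebra:
  "a \<in> sets A \<Longrightarrow> (\<lambda>M. emeasure M a) \<in> borel_measurable (prob_algebra A)"
  unfolding prob_algebra_def by (intro measurable_restrict_space1 measurable_emeasure_subprob_algebra)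

lemma sampleM_measurable:
  "(\<lambda>P. sampleM m P) \<in> prob_algebra XY \<rightarrow>\<^sub>M prob_algebra (sampleM m XY)"
proof (rule measurable_prob_algebra_generated[OF _ Int_stable_prod_algebra prod_algebra_sets_into_space])
  show "sets (sampleM m XY) = sigma_sets (\<Pi>\<^sub>E i\<in>{..<m}. space XY) (prod_algebra {..<m} (\<lambda>_. XY))"
    unfolding sampleM_def by (simp add: sets_PiM)
next
  fix a assume "a \<in> space (prob_algebra XY)"
  then have a: "prob_space a" "sets a = sets XY" by (auto simp: space_prob_algebra)
  then show "prob_space (sampleM m a)" unfolding sampleM_def by (intro prob_space_PiM) auto
  show "sets (sampleM m a) = sets (sampleM m XY)" unfolding sampleM_def
    using a by (intro sets_PiM_cong) auto
next
  fix A assume A: "A \<in> prod_algebra {..<m} (\<lambda>_. XY)"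
  then obtain E where E: "A = Pi\<^sub>E {..<m} E" "E \<in> (\<Pi> i\<in>{..<m}. sets XY)"
    by (rule prod_algebraE_all)
  have "(\<lambda>a. \<Prod>i\<in>{..<m}. emeasure a (E i)) \<in> borel_measurable (prob_algebra XY)"
    using E by (intro borel_measurable_prod_ennreal meas_emeasure_prob_algebra) auto
  moreover have "emeasure (sampleM m a) A = (\<Prod>i\<in>{..<m}. emeasure a (E i))"
    if "a \<in> space (prob_algebra XY)" for a
  proof -
    from that have a: "prob_space a" "sets a = sets XY" by (auto simp: space_prob_algebra)
    interpret product_sigma_finite "\<lambda>_. a"
      using a by (simp add: product_sigma_finite_def prob_space_imp_sigma_finite)
    show ?thesis unfolding sampleM_def E using E a by (intro emeasure_PiM) auto
  qed
  ultimately show "(\<lambda>a. emeasure (sampleM m a) A) \<in> borel_measurable (prob_algebra XY)"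
    by (subst measurable_cong) auto
qed

locale thm5 =
  fixes XY :: "('x \<times> 'y) measure"
    and Gm :: "('x \<Rightarrow> 'z) measure"
    and H :: "('z \<Rightarrow> real) set"
    and l :: "real \<Rightarrow> 'y \<Rightarrow> real"
    and alg :: "('x \<Rightarrow> 'z) \<Rightarrow> ('x \<times> 'y) list \<Rightarrow> ('z \<Rightarrow> real)"
    and beta :: "('x \<Rightarrow> 'z) \<Rightarrow> nat \<Rightarrow> real"
    and C eta :: real
    and m T :: nat
    and Q :: "('x \<times> 'y) measure measure"
    and pi1 :: "('x \<Rightarrow> 'z) measure"
  assumes m_pos: "0 < m" and T_pos: "0 < T" and eta_pos: "0 < eta"
    and loss_nonneg: "\<And>u y. 0 \<le> l u y"
    and alg_bounded: "\<And>g S. g \<in> space Gm \<Longrightarrow> S \<in> {..<m} \<rightarrow> space XY \<Longrightarrow>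
          0 \<le> avg_loss alg l m g S \<and> avg_loss alg l m g S \<le> C"
    and alg_regret: "\<And>g S. g \<in> space Gm \<Longrightarrow> S \<in> {..<m} \<rightarrow> space XY \<Longrightarrow>
          ereal (avg_loss alg l m g S) - (INF h\<in>H. ereal (emp_loss l m g h S)) \<le> ereal (beta g m)"
    and Q_prob: "prob_space Q" and Q_sets: "sets Q = sets (prob_algebra XY)"
    and pi1_prob: "prob_space pi1" and pi1_sets: "sets pi1 = sets Gm"
    and meas_avg: "(\<lambda>(g, S). avg_loss alg l m g S) \<in> borel_measurable (Gm \<Otimes>\<^sub>M sampleM m XY)"
    and meas_alg: "\<And>i. i < m \<Longrightarrow>
          (\<lambda>(g, S, z). l (alg g (pref S i) (g (fst z))) (snd z))
            \<in> borel_measurable (Gm \<Otimes>\<^sub>M sampleM m XY \<Otimes>\<^sub>M XY)"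
    and meas_H: "\<And>h. h \<in> H \<Longrightarrow>
          (\<lambda>(g, z). l (h (g (fst z))) (snd z)) \<in> borel_measurable (Gm \<Otimes>\<^sub>M XY)"
    and meas_inf: "(\<lambda>(g, P). INF h\<in>H. \<integral>\<^sup>+ z. ennreal (l (h (g (fst z))) (snd z)) \<partial>P)
          \<in> borel_measurable (Gm \<Otimes>\<^sub>M prob_algebra XY)"
    and meas_beta: "(\<lambda>g. beta g m) \<in> borel_measurable Gm"
begin

abbreviation "L \<equiv> avg_loss alg l m"
definition "W = Q \<bind> (\<lambda>P. sampleM m P)"

lemma Q_space: "space Q = space (prob_algebra XY)"
  using Q_sets by (rule sets_eq_imp_space_eq)

lemma K_meas: "(\<lambda>P. sampleM m P) \<in> Q \<rightarrow>\<^sub>M prob_algebra (sampleM m XY)"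
  using sampleM_measurable[of m XY] by (simp cong: measurable_cong_sets add: Q_sets)

lemma W_prob: "prob_space W"
  unfolding W_def
proof (rule prob_space_bind')
  show "Q \<in> space (prob_algebra (prob_algebra XY))" using Q_prob Q_sets by (simp add: space_prob_algebra)
  show "(\<lambda>P. sampleM m P) \<in> prob_algebra XY \<rightarrow>\<^sub>M prob_algebra (sampleM m XY)" by (rule sampleM_measurable)
qed

lemma W_sets: "sets W = sets (sampleM m XY)"
  unfolding W_def
proof (rule sets_bind')
  show "Q \<in> space (prob_algebra (prob_algebra XY))" using Q_prob Q_sets by (simp add: space_prob_algebra)
  show "(\<lambda>P. sampleM m P) \<in> prob_algebra XY \<rightarrow>\<^sub>M prob_algebra (sampleM m XY)" by (rule sampleM_measurable)
qed

lemma L_meas: "g \<in> space Gm \<Longrightarrow> (\<lambda>S. L g S) \<in> borel_measurable (sampleM m XY)"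
  using measurable_Pair2[OF meas_avg] by simp

lemma pref_upd: "pref (x(i := y)) i = pref x i"
  unfolding pref_def by auto

lemma sampleM_sets: "sets P = sets XY \<Longrightarrow> sets (sampleM m P) = sets (sampleM m XY)"
  unfolding sampleM_def by (intro sets_PiM_cong) auto

lemma a_meas:
  assumes g: "g \<in> space Gm" and Pp: "sets P = sets XY" and i: "i < m"
  shows "(\<lambda>(S, z). ennreal (l (alg g (pref S i) (g (fst z))) (snd z) / m)) \<in> borel_measurable (PiM {..<m} (\<lambda>_. P) \<Otimes>\<^sub>M P)"
proof -
  have m1: "(\<lambda>(S, z). l (alg g (pref S i) (g (fst z))) (snd z)) \<in> borel_measurable (sampleM m XY \<Otimes>\<^sub>M XY)"
    using measurable_Pair2[OF meas_alg[OF i] g] by simp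
  have "sets (PiM {..<m} (\<lambda>_. P) \<Otimes>\<^sub>M P) = sets (sampleM m XY \<Otimes>\<^sub>M XY)"
    using sampleM_sets[OF Pp] Pp unfolding sampleM_def by (intro sets_pair_measure_cong) auto
  moreover have "(\<lambda>(S, z). ennreal (l (alg g (pref S i) (g (fst z))) (snd z) / m)) \<in> borel_measurable (sampleM m XY \<Otimes>\<^sub>M XY)"
    using m1 by measurable
  ultimately show ?thesis by (simp cong: measurable_cong_sets)
qed

lemma exch_alg:
  assumes g: "g \<in> space Gm" and P: "P \<in> space (prob_algebra XY)" and i: "i < m"
  shows "(\<integral>\<^sup>+S. (\<integral>\<^sup>+z. ennreal (l (alg g (pref S i) (g (fst z))) (snd z) / m) \<partial>P) \<partial>sampleM m P)
       = (\<integral>\<^sup>+S. ennreal (l (alg g (pref S i) (g (fst (S i)))) (snd (S i)) / m) \<partial>sampleM m P)"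
proof -
  from P have Pp: "prob_space P" "sets P = sets XY" by (auto simp: space_prob_algebra)
  have m1: "(\<lambda>(S, z). l (alg g (pref S i) (g (fst z))) (snd z)) \<in> borel_measurable (sampleM m XY \<Otimes>\<^sub>M XY)"
    using measurable_Pair2[OF meas_alg[OF i] g] by simp
  have m2: "(\<lambda>(S, z). ennreal (l (alg g (pref S i) (g (fst z))) (snd z) / m)) \<in> borel_measurable (PiM {..<m} (\<lambda>_. P) \<Otimes>\<^sub>M P)"
  proof -
    have "sets (PiM {..<m} (\<lambda>_. P) \<Otimes>\<^sub>M P) = sets (sampleM m XY \<Otimes>\<^sub>M XY)"
      using sampleM_sets[OF Pp(2)] Pp(2) unfolding sampleM_def by (intro sets_pair_measure_cong) auto
    moreover have "(\<lambda>(S, z). ennreal (l (alg g (pref S i) (g (fst z))) (snd z) / m)) \<in> borel_measurable (sampleM m XY \<Otimes>\<^sub>M XY)"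
      using m1 by measurable
    ultimately show ?thesis by (simp cong: measurable_cong_sets)
  qed
  show ?thesis unfolding sampleM_def
    by (rule PiM_exch[symmetric, OF Pp(1) _ _ m2]) (use i in \<open>auto simp: pref_upd\<close>)
qed

lemma NTR_inner:
  assumes g: "g \<in> space Gm" and P: "P \<in> space (prob_algebra XY)"
  shows "(\<integral>\<^sup>+ S. (\<integral>\<^sup>+ z. ennreal ((\<Sum>i<m. l (alg g (pref S i) (g (fst z))) (snd z)) / real m) \<partial>P) \<partial>sampleM m P)
       = (\<integral>\<^sup>+ S. ennreal (L g S) \<partial>sampleM m P)"
proof -
  from P have Pp: "prob_space P" "sets P = sets XY" by (auto simp: space_prob_algebra)
  interpret P: prob_space P by (rule Pp)
  note am = a_meas[OF g Pp(2)]
  have split: "ennreal ((\<Sum>i<m. f i) / real m) = (\<Sum>i<m. ennreal (f i / m))" if "\<And>i. 0 \<le> f i" for f :: "nat \<Rightarrow> real"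
    using that by (simp add: sum_divide_distrib sum_ennreal)
  have "(\<integral>\<^sup>+ S. (\<integral>\<^sup>+ z. ennreal ((\<Sum>i<m. l (alg g (pref S i) (g (fst z))) (snd z)) / real m) \<partial>P) \<partial>sampleM m P)
     = (\<integral>\<^sup>+ S. (\<Sum>i<m. \<integral>\<^sup>+ z. ennreal (l (alg g (pref S i) (g (fst z))) (snd z) / m) \<partial>P) \<partial>sampleM m P)"
  proof (rule nn_integral_cong)
    fix S assume S: "S \<in> space (sampleM m P)"
    show "(\<integral>\<^sup>+ z. ennreal ((\<Sum>i<m. l (alg g (pref S i) (g (fst z))) (snd z)) / real m) \<partial>P)
      = (\<Sum>i<m. \<integral>\<^sup>+ z. ennreal (l (alg g (pref S i) (g (fst z))) (snd z) / m) \<partial>P)"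
      apply (subst split, rule loss_nonneg)
      apply (rule nn_integral_sum)
      using measurable_Pair2[OF am S[unfolded sampleM_def]] by simp
  qed
  also have "\<dots> = (\<Sum>i<m. \<integral>\<^sup>+ S. (\<integral>\<^sup>+ z. ennreal (l (alg g (pref S i) (g (fst z))) (snd z) / m) \<partial>P) \<partial>sampleM m P)"
    apply (rule nn_integral_sum)
    unfolding sampleM_def using P.borel_measurable_nn_integral[OF am] by simp
  also have "\<dots> = (\<Sum>i<m. \<integral>\<^sup>+ S. ennreal (l (alg g (pref S i) (g (fst (S i)))) (snd (S i)) / m) \<partial>sampleM m P)"
    by (intro sum.cong refl exch_alg[OF g P]) auto
  also have "\<dots> = (\<integral>\<^sup>+ S. (\<Sum>i<m. ennreal (l (alg g (pref S i) (g (fst (S i)))) (snd (S i)) / m)) \<partial>sampleM m P)"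
  proof (rule nn_integral_sum[symmetric])
    fix i assume i: "i \<in> {..<m}"
    have "(\<lambda>S. (\<lambda>(S, z). ennreal (l (alg g (pref S i) (g (fst z))) (snd z) / m)) (S, S i)) \<in> borel_measurable (PiM {..<m} (\<lambda>_. P))"
      using am[of i] i by (intro measurable_compose[OF _ am[of i]] measurable_Pair measurable_ident_sets measurable_component_singleton) auto
    then show "(\<lambda>S. ennreal (l (alg g (pref S i) (g (fst (S i)))) (snd (S i)) / m)) \<in> borel_measurable (sampleM m P)"
      unfolding sampleM_def by simp
  qed
  also have "\<dots> = (\<integral>\<^sup>+ S. ennreal (L g S) \<partial>sampleM m P)"
    by (subst split[symmetric], rule loss_nonneg) (simp add: avg_loss_def)
  finally show ?thesis .
qed

lemma NTR_eq:
  assumes g: "g \<in> space Gm"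
  shows "new_task_risk Q alg l m g = (\<integral>\<^sup>+ y. ennreal (L g y) \<partial>W)"
proof -
  have "new_task_risk Q alg l m g = (\<integral>\<^sup>+ P. (\<integral>\<^sup>+ S. ennreal (L g S) \<partial>sampleM m P) \<partial>Q)"
    unfolding new_task_risk_def by (intro nn_integral_cong NTR_inner[OF g]) (simp add: Q_space)
  also have "\<dots> = (\<integral>\<^sup>+ y. ennreal (L g y) \<partial>W)"
    unfolding W_def
    by (rule nn_integral_bind[symmetric, OF _ measurable_prob_algebraD[OF K_meas]]) (use L_meas[OF g] in measurable)
  finally show ?thesis .
qed

end

lemma INF_ennreal_add_const_set:
  fixes f :: "'a \<Rightarrow> ennreal"
  assumes "H \<noteq> {}"
  shows "(INF i\<in>H. f i + c) = (INF i\<in>H. f i) + c"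
  using continuous_at_Inf_mono[of "\<lambda>x. x + c" "f`H"] assms
  using continuous_add[of "at_right (Inf (f ` H))", of "\<lambda>x. x" "\<lambda>x. c"]
  by (auto simp: mono_def image_comp)

context thm5 begin

lemma emp_marg:
  assumes g: "g \<in> space Gm" and P: "P \<in> space (prob_algebra XY)" and h: "h \<in> H"
  shows "(\<integral>\<^sup>+S. ennreal (emp_loss l m g h S) \<partial>sampleM m P) = (\<integral>\<^sup>+z. ennreal (l (h (g (fst z))) (snd z)) \<partial>P)"
proof -
  from P have Pp: "prob_space P" "sets P = sets XY" by (auto simp: space_prob_algebra)
  have fm: "(\<lambda>z. ennreal (l (h (g (fst z))) (snd z) / m)) \<in> borel_measurable P"
  proof -
    have "(\<lambda>z. l (h (g (fst z))) (snd z)) \<in> borel_measurable XY"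
      using measurable_Pair2[OF meas_H[OF h] g] by simp
    then show ?thesis using Pp by (simp cong: measurable_cong_sets)
  qed
  have fm': "(\<lambda>z. ennreal (l (h (g (fst z))) (snd z))) \<in> borel_measurable P"
  proof -
    have "(\<lambda>z. l (h (g (fst z))) (snd z)) \<in> borel_measurable XY"
      using measurable_Pair2[OF meas_H[OF h] g] by simp
    then show ?thesis using Pp by (simp cong: measurable_cong_sets)
  qed
  have "(\<integral>\<^sup>+S. ennreal (emp_loss l m g h S) \<partial>sampleM m P)
      = (\<integral>\<^sup>+S. (\<Sum>i<m. ennreal (l (h (g (fst (S i)))) (snd (S i)) / m)) \<partial>sampleM m P)"
    unfolding emp_loss_def using loss_nonneg
    by (intro nn_integral_cong) (simp add: sum_divide_distrib sum_ennreal)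
  also have "\<dots> = (\<Sum>i<m. \<integral>\<^sup>+S. ennreal (l (h (g (fst (S i)))) (snd (S i)) / m) \<partial>sampleM m P)"
    unfolding sampleM_def
    by (rule nn_integral_sum) (rule measurable_compose[OF measurable_component_singleton[where M="\<lambda>_. P"] fm]; simp)
  also have "\<dots> = (\<Sum>i<m. \<integral>\<^sup>+z. ennreal (l (h (g (fst z))) (snd z) / m) \<partial>P)"
    unfolding sampleM_def
    by (intro sum.cong refl PiM_marg[where M="\<lambda>_. P", OF Pp(1)]) (use fm in auto)
  also have "\<dots> = of_nat m * (\<integral>\<^sup>+z. ennreal (l (h (g (fst z))) (snd z) / m) \<partial>P)"
    by simp
  also have "\<dots> = of_nat m * ((\<integral>\<^sup>+z. ennreal (l (h (g (fst z))) (snd z)) \<partial>P) * ennreal (1 / m))"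
  proof -
    have "(\<integral>\<^sup>+z. ennreal (l (h (g (fst z))) (snd z) / m) \<partial>P) = (\<integral>\<^sup>+z. ennreal (l (h (g (fst z))) (snd z)) * ennreal (1 / m) \<partial>P)"
      using loss_nonneg by (intro nn_integral_cong) (simp add: ennreal_mult[symmetric])
    also have "\<dots> = (\<integral>\<^sup>+z. ennreal (l (h (g (fst z))) (snd z)) \<partial>P) * ennreal (1 / m)"
      by (rule nn_integral_multc) (use fm' in simp)
    finally show ?thesis by simp
  qed
  also have "\<dots> = (\<integral>\<^sup>+z. ennreal (l (h (g (fst z))) (snd z)) \<partial>P) * (of_nat m * ennreal (1 / m))"
    by (simp add: ac_simps)
  also have "of_nat m * ennreal (1 / m) = 1"
    using m_pos by (simp add: ennreal_of_nat_eq_real_of_nat ennreal_mult[symmetric])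
  finally show ?thesis by simp
qed

end

lemma nn_integral_add_const_prob:
  assumes "prob_space M" "f \<in> borel_measurable M"
  shows "(\<integral>\<^sup>+x. f x + c \<partial>M) = (\<integral>\<^sup>+x. f x \<partial>M) + c"
proof -
  interpret prob_space M by fact
  show ?thesis using assms(2) by (subst nn_integral_add) (auto simp: emeasure_space_1)
qed

context thm5 begin

lemma regret_pt:
  assumes g: "g \<in> space Gm" and S: "S \<in> {..<m} \<rightarrow> space XY" and h: "h \<in> H"
  shows "L g S \<le> emp_loss l m g h S + beta g m"
proof -
  have "ereal (L g S) - ereal (emp_loss l m g h S) \<le> ereal (L g S) - (INF h\<in>H. ereal (emp_loss l m g h S))"
    by (intro ereal_minus_mono order_refl INF_lower h)
  also have "\<dots> \<le> ereal (beta g m)" by (rule alg_regret[OF g S])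
  finally show ?thesis by simp
qed

definition "ntrP g P = (\<integral>\<^sup>+S. ennreal (L g S) \<partial>sampleM m P)"
definition "oP g P = (INF h\<in>H. \<integral>\<^sup>+ z. ennreal (l (h (g (fst z))) (snd z)) \<partial>P)"

lemma inner_bound:
  assumes g: "g \<in> space Gm" and P: "P \<in> space (prob_algebra XY)"
  shows "ntrP g P + ennreal (max (- beta g m) 0) \<le> oP g P + ennreal (max (beta g m) 0)"
proof (cases "H = {}")
  case True then show ?thesis unfolding oP_def by simp
next
  case False
  from P have Pp: "prob_space P" "sets P = sets XY" by (auto simp: space_prob_algebra)
  have SP: "prob_space (sampleM m P)" unfolding sampleM_def using Pp by (intro prob_space_PiM) auto
  have spS: "space (sampleM m P) = space (sampleM m XY)"
    using sampleM_sets[OF Pp(2)] by (rule sets_eq_imp_space_eq)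
  have Lm: "(\<lambda>S. ennreal (L g S)) \<in> borel_measurable (sampleM m P)"
    using L_meas[OF g] sampleM_sets[OF Pp(2)] by (simp cong: measurable_cong_sets)
  let ?b = "beta g m"
  have "ntrP g P + ennreal (max (- ?b) 0) \<le> (\<integral>\<^sup>+ z. ennreal (l (h (g (fst z))) (snd z)) \<partial>P) + ennreal (max ?b 0)"
    if h: "h \<in> H" for h
  proof -
    have Fm: "(\<lambda>z. l (h (g (fst z))) (snd z)) \<in> borel_measurable P"
      using measurable_Pair2[OF meas_H[OF h] g] Pp by (simp cong: measurable_cong_sets)
    have em: "(\<lambda>S. (\<Sum>i<m. (\<lambda>z. l (h (g (fst z))) (snd z)) (S i)) / real m) \<in> borel_measurable (sampleM m P)"
      unfolding sampleM_def
      by (intro borel_measurable_divide borel_measurable_sum measurable_compose[OF measurable_component_singleton[where M="\<lambda>_. P"] Fm] borel_measurable_const) auto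
    then have em': "(\<lambda>S. ennreal (emp_loss l m g h S)) \<in> borel_measurable (sampleM m P)"
      unfolding emp_loss_def by simp
    have "ntrP g P + ennreal (max (- ?b) 0) = (\<integral>\<^sup>+S. ennreal (L g S) + ennreal (max (- ?b) 0) \<partial>sampleM m P)"
      unfolding ntrP_def by (rule nn_integral_add_const_prob[OF SP Lm, symmetric])
    also have "\<dots> \<le> (\<integral>\<^sup>+S. ennreal (emp_loss l m g h S) + ennreal (max ?b 0) \<partial>sampleM m P)"
    proof (rule nn_integral_mono)
      fix S assume "S \<in> space (sampleM m P)"
      then have S: "S \<in> {..<m} \<rightarrow> space XY" using spS by (auto simp: sampleM_def space_PiM)
      have "0 \<le> L g S" using alg_bounded[OF g S] by simp
      moreover have "0 \<le> emp_loss l m g h S" unfolding emp_loss_def using loss_nonneg by (auto intro!: sum_nonneg divide_nonneg_nonneg)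
      moreover note regret_pt[OF g S h]
      ultimately show "ennreal (L g S) + ennreal (max (- ?b) 0) \<le> ennreal (emp_loss l m g h S) + ennreal (max ?b 0)"
        apply -
      proof -
        assume a: "0 \<le> L g S" "0 \<le> emp_loss l m g h S" "L g S \<le> emp_loss l m g h S + ?b"
        have A: "ennreal (L g S + max (- ?b) 0) = ennreal (L g S) + ennreal (max (- ?b) 0)"
          by (rule ennreal_plus) (use a in auto)
        have B: "ennreal (emp_loss l m g h S + max ?b 0) = ennreal (emp_loss l m g h S) + ennreal (max ?b 0)"
          by (rule ennreal_plus) (use a in auto)
        show ?thesis unfolding A[symmetric] B[symmetric] by (intro ennreal_leI) (use a in \<open>auto simp: max_def\<close>)
      qed
    qed
    also have "\<dots> = (\<integral>\<^sup>+S. ennreal (emp_loss l m g h S) \<partial>sampleM m P) + ennreal (max ?b 0)"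
      by (rule nn_integral_add_const_prob[OF SP em'])
    also have "\<dots> = (\<integral>\<^sup>+ z. ennreal (l (h (g (fst z))) (snd z)) \<partial>P) + ennreal (max ?b 0)"
      by (simp add: emp_marg[OF g P h])
    finally show ?thesis .
  qed
  then have "ntrP g P + ennreal (max (- ?b) 0) \<le> (INF h\<in>H. (\<integral>\<^sup>+ z. ennreal (l (h (g (fst z))) (snd z)) \<partial>P) + ennreal (max ?b 0))"
    by (rule INF_greatest)
  also have "\<dots> = oP g P + ennreal (max ?b 0)"
    unfolding oP_def by (rule INF_ennreal_add_const_set[OF False])
  finally show ?thesis .
qed

end

context thm5 begin

lemma ntrP_meas: "g \<in> space Gm \<Longrightarrow> ntrP g \<in> borel_measurable Q"
  unfolding ntrP_def[abs_def]
  by (rule measurable_compose[OF measurable_prob_algebraD[OF K_meas] nn_integral_measurable_subprob_algebra])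
     (use L_meas in measurable)

lemma oP_meas: "g \<in> space Gm \<Longrightarrow> oP g \<in> borel_measurable Q"
  unfolding oP_def[abs_def] using measurable_Pair2[OF meas_inf] Q_sets
  by (simp cong: measurable_cong_sets)

lemma NTR_ntrP: "g \<in> space Gm \<Longrightarrow> new_task_risk Q alg l m g = (\<integral>\<^sup>+P. ntrP g P \<partial>Q)"
  unfolding new_task_risk_def ntrP_def by (intro nn_integral_cong NTR_inner) (auto simp: Q_space)

lemma NTR_le_ennreal:
  assumes g: "g \<in> space Gm"
  shows "new_task_risk Q alg l m g + ennreal (max (- beta g m) 0) \<le> oracle_risk Q H l g + ennreal (max (beta g m) 0)"
proof -
  have "new_task_risk Q alg l m g + ennreal (max (- beta g m) 0) = (\<integral>\<^sup>+P. ntrP g P + ennreal (max (- beta g m) 0) \<partial>Q)"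
    unfolding NTR_ntrP[OF g] by (rule nn_integral_add_const_prob[OF Q_prob ntrP_meas[OF g], symmetric])
  also have "\<dots> \<le> (\<integral>\<^sup>+P. oP g P + ennreal (max (beta g m) 0) \<partial>Q)"
    by (intro nn_integral_mono inner_bound[OF g]) (simp add: Q_space)
  also have "\<dots> = oracle_risk Q H l g + ennreal (max (beta g m) 0)"
    unfolding oracle_risk_def oP_def[symmetric] by (rule nn_integral_add_const_prob[OF Q_prob oP_meas[OF g]])
  finally show ?thesis .
qed

lemma NTR_le_ereal:
  assumes g: "g \<in> space Gm"
  shows "enn2ereal (new_task_risk Q alg l m g) \<le> enn2ereal (oracle_risk Q H l g) + ereal (beta g m)"
proof (cases "oracle_risk Q H l g = top")
  case True then show ?thesis by simp
next
  case False
  note le = NTR_le_ennreal[OF g]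
  have "new_task_risk Q alg l m g \<noteq> top"
  proof
    assume "new_task_risk Q alg l m g = top"
    then show False using le False by (simp add: top_unique)
  qed
  then obtain n where n: "new_task_risk Q alg l m g = ennreal n" "0 \<le> n" by (cases "new_task_risk Q alg l m g") auto
  obtain r where r: "oracle_risk Q H l g = ennreal r" "0 \<le> r" using False by (cases "oracle_risk Q H l g") auto
  have "ennreal (n + max (- beta g m) 0) \<le> ennreal (r + max (beta g m) 0)"
    using le n r by (subst (1 2) ennreal_plus) auto
  then have "n + max (- beta g m) 0 \<le> r + max (beta g m) 0"
    by (subst (asm) ennreal_le_iff) (use r in auto)
  then have "n \<le> r + beta g m" by (auto simp: max_def split: if_splits)
  then show ?thesis using n r by simp
qed

end

lemma gibbs:
  assumes Mp: "prob_space M" and Np: "prob_space N" and sN: "sets N = sets M"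
    and ac: "absolutely_continuous M N"
    and int: "integrable N (entropy_density (exp 1) M N)"
    and Fm[measurable]: "F \<in> borel_measurable M" and Fb: "\<And>x. x \<in> space M \<Longrightarrow> \<bar>F x\<bar> \<le> B"
  shows "(\<integral>x. F x \<partial>N) - KL_divergence (exp 1) M N \<le> ln (\<integral>x. exp (F x) \<partial>M)"
proof -
  interpret M: prob_space M by fact
  interpret N: prob_space N by fact
  have "finite_measure N" by unfold_locales
  from M.real_RN_deriv[OF this ac sN] obtain D
    where D: "D \<in> borel_measurable M"
      "AE x in M. RN_deriv M N x = ennreal (D x)"
      "AE x in N. 0 < D x"
      "\<And>x. 0 \<le> D x"
    by this auto
  note D(1)[measurable]
  have Ndens: "N = density M D"
  proof -
    have "N = density M (RN_deriv M N)"
      using ac sN by (rule M.density_RN_deriv[symmetric])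
    also have "\<dots> = density M D"
      using D by (auto intro!: density_cong)
    finally show ?thesis .
  qed
  have spN: "space N = space M" using sN by (rule sets_eq_imp_space_eq)
  have aeN: "AE x in N. RN_deriv M N x = ennreal (D x)"
    using absolutely_continuous_AE[OF sN ac D(2)] .
  have ent: "AE x in N. entropy_density (exp 1) M N x = ln (D x)"
    using aeN by eventually_elim (simp add: entropy_density_def log_def D(4))
  have KL: "KL_divergence (exp 1) M N = (\<integral>x. ln (D x) \<partial>N)"
    unfolding KL_divergence_def using ent by (intro integral_cong_AE) (auto simp: sN cong: measurable_cong_sets)
  have intlnD: "integrable N (\<lambda>x. ln (D x))"
    using int ent by (subst integrable_cong_AE[where g="entropy_density (exp 1) M N"]) (auto simp: sN cong: measurable_cong_sets)
  have FmN[measurable]: "F \<in> borel_measurable N" using Fm sN by (simp cong: measurable_cong_sets)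
  have intFN: "integrable N F"
    by (rule N.integrable_const_bound[where B=B]) (use Fb spN in auto)
  define Z where "Z = (\<integral>x. exp (F x) \<partial>M)"
  have intexp: "integrable M (\<lambda>x. exp (F x))"
  proof -
    have Fb': "\<And>x. x \<in> space M \<Longrightarrow> F x \<le> B" using Fb by (auto simp: abs_le_iff)
    show ?thesis by (rule M.integrable_const_bound[where B="exp B"]) (auto intro!: AE_I2 Fb')
  qed
  have Zpos: "0 < Z"
  proof -
    have "(\<integral>x. exp (- B) \<partial>M) \<le> Z"
      unfolding Z_def using Fb by (intro integral_mono intexp) (auto simp: abs_le_iff, force)
    then show ?thesis by (simp add: M.prob_space) (meson exp_gt_zero less_le_trans)
  qed
  define u where "u x = exp (F x) / (Z * D x)" for x
  have um[measurable]: "u \<in> borel_measurable M" unfolding u_def by measurable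
  have Du: "D x *\<^sub>R u x = (if D x = 0 then 0 else exp (F x) / Z)" for x
    unfolding u_def by auto
  have Du': "D x * u x = (if D x = 0 then 0 else exp (F x) / Z)" for x
    unfolding u_def by auto
  have intDu: "integrable M (\<lambda>x. D x *\<^sub>R u x)"
    unfolding Du
    by (rule M.integrable_const_bound[where B="exp B / Z"])
       (use Fb Zpos in \<open>auto intro!: divide_right_mono simp: abs_le_iff\<close>)
  have intu: "integrable N u"
    unfolding Ndens using D(4) intDu by (subst integrable_density) auto
  have intu1: "(\<integral>x. u x \<partial>N) \<le> 1"
  proof -
    have "(\<integral>x. u x \<partial>N) = (\<integral>x. D x *\<^sub>R u x \<partial>M)"
      unfolding Ndens using D(4) by (subst integral_density) auto
    also have "\<dots> \<le> (\<integral>x. exp (F x) / Z \<partial>M)"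
      using intDu intexp Zpos by (intro integral_mono) (auto simp: Du')
    also have "\<dots> = 1" unfolding Z_def using Zpos Z_def by simp
    finally show ?thesis .
  qed
  have pt: "AE x in N. F x - ln (D x) - ln Z \<le> u x - 1"
    using D(3)
  proof eventually_elim
    fix x assume "0 < D x"
    then have "ln (u x) = F x - ln (D x) - ln Z"
      unfolding u_def using Zpos by (simp add: ln_div ln_mult)
    moreover have "ln (u x) \<le> u x - 1"
      by (rule ln_le_minus_one) (use \<open>0 < D x\<close> Zpos in \<open>simp add: u_def\<close>)
    ultimately show "F x - ln (D x) - ln Z \<le> u x - 1" by simp
  qed
  have "(\<integral>x. F x \<partial>N) - KL_divergence (exp 1) M N - ln Z = (\<integral>x. F x - ln (D x) - ln Z \<partial>N)"
    unfolding KL using intFN intlnD by (simp add: N.prob_space)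
  also have "\<dots> \<le> (\<integral>x. u x - 1 \<partial>N)"
    by (rule integral_mono_AE) (use intFN intlnD intu pt in auto)
  also have "\<dots> = (\<integral>x. u x \<partial>N) - 1"
    using intu by (simp add: N.prob_space)
  also have "\<dots> \<le> 0" using intu1 by simp
  finally show ?thesis unfolding Z_def by simp
qed

locale ewa_setup =
  fixes pi1 :: "'g measure" and eta C :: real and Lf :: "'g \<Rightarrow> 's \<Rightarrow> real" and D :: "nat \<Rightarrow> 's" and T :: nat
  assumes pi1_prob: "prob_space pi1" and eta_pos: "0 < eta"
    and lt_meas: "\<And>t. t < T \<Longrightarrow> (\<lambda>g. Lf g (D t)) \<in> borel_measurable pi1"
    and lt_bnd: "\<And>t g. t < T \<Longrightarrow> g \<in> space pi1 \<Longrightarrow> 0 \<le> Lf g (D t) \<and> Lf g (D t) \<le> C"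
begin

interpretation P: prob_space pi1 by (rule pi1_prob)

definition "lt t g = Lf g (D t)"
definition "V t g = (\<Sum>s<t. lt s g)"
definition "Z t = (\<integral>g. exp (- eta * V t g) \<partial>pi1)"
definition "w t g = exp (- eta * V t g) / Z t"

lemma V_meas[measurable]: "t \<le> T \<Longrightarrow> V t \<in> borel_measurable pi1"
  unfolding V_def[abs_def] lt_def using lt_meas by (intro borel_measurable_sum) auto

lemma V_bnd: "t \<le> T \<Longrightarrow> g \<in> space pi1 \<Longrightarrow> 0 \<le> V t g \<and> V t g \<le> t * C"
proof -
  assume t: "t \<le> T" and g: "g \<in> space pi1"
  have "0 \<le> V t g" unfolding V_def lt_def using lt_bnd t g by (intro sum_nonneg) auto
  moreover have "V t g \<le> (\<Sum>s<t. C)" unfolding V_def lt_def using lt_bnd t g by (intro sum_mono) auto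
  ultimately show ?thesis by simp
qed

lemma int_expV: "t \<le> T \<Longrightarrow> integrable pi1 (\<lambda>g. exp (- eta * V t g))"
  by (rule P.integrable_const_bound[where B=1]) (use V_bnd eta_pos in \<open>auto intro!: AE_I2 simp: mult_nonneg_nonneg\<close>)

lemma Z_pos: "t \<le> T \<Longrightarrow> 0 < Z t"
proof -
  assume t: "t \<le> T"
  have "(\<integral>g. exp (- eta * (t * C)) \<partial>pi1) \<le> Z t"
    unfolding Z_def using V_bnd[OF t] eta_pos
    by (intro integral_mono int_expV[OF t]) (auto intro!: mult_left_mono)
  then show ?thesis by (simp add: P.prob_space) (meson exp_gt_zero less_le_trans)
qed

lemma Z0: "Z 0 = 1"
  unfolding Z_def V_def by (simp add: P.prob_space)

lemma w_meas[measurable]: "t \<le> T \<Longrightarrow> w t \<in> borel_measurable pi1"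
  unfolding w_def[abs_def] by measurable

lemma w_nonneg: "0 \<le> w t g" if "t \<le> T"
  unfolding w_def using Z_pos[OF that] by simp

lemma V_Suc: "V (Suc t) g = V t g + lt t g"
  unfolding V_def by simp

lemma ewa_dens: "t \<le> T \<Longrightarrow> ewa pi1 eta Lf D t = density pi1 (\<lambda>g. ennreal (w t g))"
proof (induction t)
  case 0
  have "density pi1 (\<lambda>g. ennreal (w 0 g)) = density pi1 (\<lambda>_. 1)"
    by (simp add: w_def Z0 V_def)
  then show ?case by (simp add: density_1)
next
  case (Suc t)
  then have t: "t < T" "t \<le> T" by auto
  note IH = Suc.IH[OF t(2)]
  have ltm[measurable]: "lt t \<in> borel_measurable pi1" unfolding lt_def[abs_def] using lt_meas[OF t(1)] .
  have "(\<integral>\<^sup>+ g. ennreal (exp (- eta * Lf g (D t))) \<partial>ewa pi1 eta Lf D t)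
      = (\<integral>\<^sup>+ g. ennreal (w t g * exp (- eta * lt t g)) \<partial>pi1)"
  proof -
    have wm[measurable]: "w t \<in> borel_measurable pi1" using t(2) by (rule w_meas)
    have lm[measurable]: "(\<lambda>g. Lf g (D t)) \<in> borel_measurable pi1" using t(1) by (rule lt_meas)
    show ?thesis unfolding IH
      by (subst nn_integral_density) (use w_nonneg[OF t(2)] in \<open>auto simp: ennreal_mult[symmetric] lt_def\<close>)
  qed
  also have "\<dots> = (\<integral>\<^sup>+ g. ennreal (exp (- eta * V (Suc t) g) / Z t) \<partial>pi1)"
    unfolding w_def V_Suc by (simp add: algebra_simps exp_diff exp_minus field_simps)
  also have "\<dots> = ennreal (Z (Suc t) / Z t)"
  proof -
    have "integrable pi1 (\<lambda>g. exp (- eta * V (Suc t) g) / Z t)"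
      using int_expV[of "Suc t"] t by auto
    then have "(\<integral>\<^sup>+ g. ennreal (exp (- eta * V (Suc t) g) / Z t) \<partial>pi1) = ennreal (\<integral>g. exp (- eta * V (Suc t) g) / Z t \<partial>pi1)"
      using Z_pos[OF t(2)] by (intro nn_integral_eq_integral) auto
    then show ?thesis unfolding Z_def by simp
  qed
  finally have norm: "(\<integral>\<^sup>+ g. ennreal (exp (- eta * Lf g (D t))) \<partial>ewa pi1 eta Lf D t) = ennreal (Z (Suc t) / Z t)" .
  have "ewa pi1 eta Lf D (Suc t) = density (density pi1 (\<lambda>g. ennreal (w t g)))
       (\<lambda>g. ennreal (exp (- eta * lt t g)) / ennreal (Z (Suc t) / Z t))"
    unfolding ewa.simps(2) norm unfolding IH lt_def ..
  also have "\<dots> = density pi1 (\<lambda>g. ennreal (w t g) * (ennreal (exp (- eta * lt t g)) / ennreal (Z (Suc t) / Z t)))"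
    by (rule density_density_eq) (use t(2) in measurable)
  also have "\<dots> = density pi1 (\<lambda>g. ennreal (w (Suc t) g))"
  proof (rule density_cong)
    show "AE g in pi1. ennreal (w t g) * (ennreal (exp (- eta * lt t g)) / ennreal (Z (Suc t) / Z t)) = ennreal (w (Suc t) g)"
    proof (rule AE_I2)
      fix g
      have Zp: "0 < Z t" "0 < Z (Suc t)" using Z_pos t by auto
      have "ennreal (w t g) * (ennreal (exp (- eta * lt t g)) / ennreal (Z (Suc t) / Z t))
          = ennreal (w t g * (exp (- eta * lt t g) / (Z (Suc t) / Z t)))"
        using Zp w_nonneg[OF t(2)] by (simp add: divide_ennreal ennreal_mult[symmetric])
      also have "w t g * (exp (- eta * lt t g) / (Z (Suc t) / Z t)) = w (Suc t) g"
        unfolding w_def V_Suc using Zp by (simp add: field_simps exp_add[symmetric])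
      finally show "ennreal (w t g) * (ennreal (exp (- eta * lt t g)) / ennreal (Z (Suc t) / Z t)) = ennreal (w (Suc t) g)" .
    qed
  qed (use t Suc.prems in measurable)
  finally show ?case .
qed

definition "E t = (\<integral>g. w t g * lt t g \<partial>pi1)"

lemma ltm: "t < T \<Longrightarrow> lt t \<in> borel_measurable pi1"
  unfolding lt_def[abs_def] by (rule lt_meas)

lemma lt_bnd': "t < T \<Longrightarrow> g \<in> space pi1 \<Longrightarrow> 0 \<le> lt t g \<and> lt t g \<le> C"
  unfolding lt_def by (rule lt_bnd)

lemma int_w: "t \<le> T \<Longrightarrow> integrable pi1 (w t)"
  unfolding w_def[abs_def] using int_expV by auto

lemma w_int1: "t \<le> T \<Longrightarrow> (\<integral>g. w t g \<partial>pi1) = 1"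
proof -
  assume t: "t \<le> T"
  have "(\<integral>g. w t g \<partial>pi1) = (\<integral>g. exp (- eta * V t g) \<partial>pi1) / Z t" unfolding w_def by simp
  also have "\<dots> = 1" using Z_pos[OF t] unfolding Z_def by simp
  finally show ?thesis .
qed

lemma prob_pit: "t \<le> T \<Longrightarrow> prob_space (density pi1 (\<lambda>g. ennreal (w t g)))"
proof (rule prob_spaceI)
  assume t: "t \<le> T"
  have "(\<integral>\<^sup>+g. ennreal (w t g) \<partial>pi1) = ennreal (\<integral>g. w t g \<partial>pi1)"
    by (rule nn_integral_eq_integral) (use int_w[OF t] w_nonneg[OF t] in auto)
  then show "emeasure (density pi1 (\<lambda>g. ennreal (w t g))) (space (density pi1 (\<lambda>g. ennreal (w t g)))) = 1"
  proof -
    have "emeasure (density pi1 (\<lambda>g. ennreal (w t g))) (space pi1) = (\<integral>\<^sup>+g. ennreal (w t g) \<partial>pi1)"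
      by (subst emeasure_density) (use w_meas[OF t] in \<open>auto intro!: nn_integral_cong\<close>)
    then show ?thesis using t `(\<integral>\<^sup>+g. ennreal (w t g) \<partial>pi1) = ennreal (\<integral>g. w t g \<partial>pi1)` by (simp add: w_int1)
  qed
qed

lemma int_wf: "t \<le> T \<Longrightarrow> f \<in> borel_measurable pi1 \<Longrightarrow> (\<And>g. g \<in> space pi1 \<Longrightarrow> \<bar>f g\<bar> \<le> B) \<Longrightarrow>
    integrable pi1 (\<lambda>g. w t g * f g)"
proof -
  assume t: "t \<le> T" and fm: "f \<in> borel_measurable pi1" and fb: "\<And>g. g \<in> space pi1 \<Longrightarrow> \<bar>f g\<bar> \<le> B"
  show ?thesis
  proof (rule Bochner_Integration.integrable_bound[OF integrable_mult_right[OF int_w[OF t], of B]])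
    show "(\<lambda>g. w t g * f g) \<in> borel_measurable pi1" using fm w_meas[OF t] by measurable
    show "AE x in pi1. norm (w t x * f x) \<le> norm (B * w t x)"
    proof (rule AE_I2)
      fix x assume x: "x \<in> space pi1"
      have w0: "0 \<le> w t x" by (rule w_nonneg[OF t])
      have "w t x * \<bar>f x\<bar> \<le> w t x * B" by (rule mult_left_mono[OF fb[OF x] w0])
      also have "\<dots> \<le> \<bar>B\<bar> * w t x" using w0 by (simp add: mult.commute mult_right_mono)
      finally show "norm (w t x * f x) \<le> norm (B * w t x)" using w0 by (simp add: abs_mult)
    qed
  qed
qed

lemma hoeff_step:
  assumes t: "t < T"
  shows "ln (Z (Suc t)) - ln (Z t) \<le> - eta * E t + eta\<^sup>2 * C\<^sup>2 / 8"
proof -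
  have t': "t \<le> T" "Suc t \<le> T" using t by auto
  let ?M = "density pi1 (\<lambda>g. ennreal (w t g))"
  interpret Mt: prob_space ?M by (rule prob_pit[OF t'(1)])
  have ltmM: "(\<lambda>g. - lt t g) \<in> borel_measurable ?M" using ltm[OF t] by simp
  interpret hb: interval_bounded_random_variable ?M "\<lambda>g. - lt t g" "- C" 0
    by unfold_locales (use ltmM lt_bnd'[OF t] in \<open>auto intro!: AE_I2\<close>)
  have expE: "Mt.expectation (\<lambda>g. - lt t g) = - E t"
    unfolding E_def using ltm[OF t] w_meas[OF t'(1)] w_nonneg[OF t'(1)]
    by (subst integral_density) auto
  have Zp: "0 < Z t" "0 < Z (Suc t)" using Z_pos t' by auto
  have "(\<integral>\<^sup>+g. ennreal (exp (eta * (- lt t g - Mt.expectation (\<lambda>g. - lt t g)))) \<partial>?M) \<le> ennreal (exp (eta\<^sup>2 * (0 - - C)\<^sup>2 / 8))"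
    by (rule hb.Hoeffdings_lemma_nn_integral[OF eta_pos])
  also have "(\<integral>\<^sup>+g. ennreal (exp (eta * (- lt t g - Mt.expectation (\<lambda>g. - lt t g)))) \<partial>?M)
      = (\<integral>\<^sup>+g. ennreal (w t g * exp (eta * (E t - lt t g))) \<partial>pi1)"
    unfolding expE using ltm[OF t] w_meas[OF t'(1)] w_nonneg[OF t'(1)]
    by (subst nn_integral_density) (auto simp: ennreal_mult[symmetric])
  also have "\<dots> = ennreal (\<integral>g. w t g * exp (eta * (E t - lt t g)) \<partial>pi1)"
  proof (rule nn_integral_eq_integral)
    show "integrable pi1 (\<lambda>g. w t g * exp (eta * (E t - lt t g)))"
      by (rule int_wf[OF t'(1), where B="exp (eta * E t)"])
         (use ltm[OF t] lt_bnd'[OF t] eta_pos in \<open>auto simp: mult_nonneg_nonneg\<close>)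
  qed (use w_nonneg[OF t'(1)] in auto)
  also have "(\<integral>g. w t g * exp (eta * (E t - lt t g)) \<partial>pi1) = exp (eta * E t) * Z (Suc t) / Z t"
  proof -
    have "(\<integral>g. w t g * exp (eta * (E t - lt t g)) \<partial>pi1) = (\<integral>g. (exp (eta * E t) / Z t) * exp (- eta * V (Suc t) g) \<partial>pi1)"
      unfolding w_def V_Suc by (intro Bochner_Integration.integral_cong refl) (simp add: field_simps exp_add[symmetric] exp_diff)
    also have "\<dots> = exp (eta * E t) * Z (Suc t) / Z t"
      unfolding Z_def by simp
    finally show ?thesis .
  qed
  finally have "exp (eta * E t) * Z (Suc t) / Z t \<le> exp (eta\<^sup>2 * C\<^sup>2 / 8)"
    by (subst (asm) ennreal_le_iff) auto
  moreover have X: "0 < exp (eta * E t) * Z (Suc t) / Z t" using Zp by simp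
  ultimately have "ln (exp (eta * E t) * Z (Suc t) / Z t) \<le> ln (exp (eta\<^sup>2 * C\<^sup>2 / 8))"
    by (metis exp_gt_zero ln_le_cancel_iff)
  then have "ln (exp (eta * E t) * Z (Suc t) / Z t) \<le> eta\<^sup>2 * C\<^sup>2 / 8" by simp
  then show ?thesis using Zp by (simp add: ln_div ln_mult)
qed

lemma telescope: "k \<le> T \<Longrightarrow> ln (Z k) \<le> - eta * (\<Sum>t<k. E t) + k * (eta\<^sup>2 * C\<^sup>2 / 8)"
proof (induction k)
  case 0 then show ?case by (simp add: Z0)
next
  case (Suc k)
  then have "ln (Z k) \<le> - eta * (\<Sum>t<k. E t) + k * (eta\<^sup>2 * C\<^sup>2 / 8)" by simp
  moreover have "ln (Z (Suc k)) - ln (Z k) \<le> - eta * E k + eta\<^sup>2 * C\<^sup>2 / 8"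
    using Suc.prems by (intro hoeff_step) simp
  ultimately show ?case by (simp add: algebra_simps)
qed

lemma C_nonneg: "0 < T \<Longrightarrow> 0 \<le> C"
  using lt_bnd[of 0] P.not_empty by force

lemma ewa_regret:
  assumes rp: "prob_space rho" and rs: "sets rho = sets pi1"
    and ac: "absolutely_continuous pi1 rho" and int: "integrable rho (entropy_density (exp 1) pi1 rho)"
  shows "(\<Sum>t<T. E t) \<le> (\<Sum>t<T. \<integral>g. lt t g \<partial>rho) + T * eta * C\<^sup>2 / 8 + KL_divergence (exp 1) pi1 rho / eta"
proof (cases "T = 0")
  case True
  have "0 \<le> KL_divergence (exp 1) pi1 rho"
    using gibbs[OF pi1_prob rp rs ac int, of "\<lambda>_. 0" 0] by (simp add: P.prob_space)
  then show ?thesis using True eta_pos by simp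
next
  case False
  then have C0: "0 \<le> C" by (intro C_nonneg) simp
  interpret R: prob_space rho by (rule rp)
  have spr: "space rho = space pi1" using rs by (rule sets_eq_imp_space_eq)
  define F where "F g = - eta * V T g" for g
  have Fm: "F \<in> borel_measurable pi1" unfolding F_def[abs_def] using V_meas[of T] by simp
  have Fb: "\<bar>F g\<bar> \<le> eta * (T * C)" if "g \<in> space pi1" for g
    using V_bnd[OF order_refl that] eta_pos unfolding F_def by (auto simp: abs_mult intro!: mult_left_mono)
  have g: "(\<integral>g. F g \<partial>rho) - KL_divergence (exp 1) pi1 rho \<le> ln (\<integral>g. exp (F g) \<partial>pi1)"
    by (rule gibbs[OF pi1_prob rp rs ac int Fm Fb])
  have intlt: "integrable rho (lt t)" if "t < T" for t
  proof (rule R.integrable_const_bound[where B=C])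
    show "AE x in rho. norm (lt t x) \<le> C" using lt_bnd'[OF that] spr by (intro AE_I2) auto
    show "lt t \<in> borel_measurable rho" using ltm[OF that] rs by (simp cong: measurable_cong_sets)
  qed
  have "(\<integral>g. F g \<partial>rho) = - eta * (\<Sum>t<T. \<integral>g. lt t g \<partial>rho)"
    unfolding F_def V_def using intlt by (simp add: Bochner_Integration.integral_sum)
  moreover have "ln (\<integral>g. exp (F g) \<partial>pi1) = ln (Z T)" unfolding F_def Z_def ..
  moreover note telescope[OF order_refl]
  ultimately have "- eta * (\<Sum>t<T. \<integral>g. lt t g \<partial>rho) - KL_divergence (exp 1) pi1 rho
      \<le> - eta * (\<Sum>t<T. E t) + T * (eta\<^sup>2 * C\<^sup>2 / 8)" using g by simp
  then have "eta * (\<Sum>t<T. E t) \<le> eta * ((\<Sum>t<T. \<integral>g. lt t g \<partial>rho) + T * eta * C\<^sup>2 / 8 + KL_divergence (exp 1) pi1 rho / eta)"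
    using eta_pos by (simp add: algebra_simps power2_eq_square)
  then show ?thesis using eta_pos by simp
qed

end

context thm5 begin

definition "Dm = PiM {..<T} (\<lambda>_. W)"
definition "Vj (t::nat) D g = (\<Sum>s<t. L g (D s))"
definition "Zj t D = (\<integral>g. exp (- eta * Vj t D g) \<partial>pi1)"
definition "wj t D g = exp (- eta * Vj t D g) / Zj t D"

lemma Dm_prob: "prob_space Dm"
  unfolding Dm_def using W_prob by (intro prob_space_PiM) auto

lemma spW: "space W = space (sampleM m XY)" using W_sets by (rule sets_eq_imp_space_eq)

lemma sp_pi1: "space pi1 = space Gm" using pi1_sets by (rule sets_eq_imp_space_eq)

lemma Dm_space: "D \<in> space Dm \<Longrightarrow> t < T \<Longrightarrow> D t \<in> {..<m} \<rightarrow> space XY"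
  unfolding Dm_def by (auto simp: space_PiM spW sampleM_def PiE_iff)

lemma Dm_space': "D \<in> space Dm \<Longrightarrow> t < T \<Longrightarrow> D t \<in> space (sampleM m XY)"
  unfolding Dm_def by (auto simp: space_PiM spW PiE_iff)

lemma Lm_pi1: "(\<lambda>(g, S). L g S) \<in> borel_measurable (pi1 \<Otimes>\<^sub>M W)"
proof -
  have "sets (pi1 \<Otimes>\<^sub>M W) = sets (Gm \<Otimes>\<^sub>M sampleM m XY)"
    by (intro sets_pair_measure_cong pi1_sets W_sets)
  then show ?thesis using meas_avg by (simp cong: measurable_cong_sets)
qed

lemma ewa_inst: assumes D: "D \<in> space Dm" shows "ewa_setup pi1 eta C L D T"
proof (rule ewa_setup.intro)
  show "prob_space pi1" by (rule pi1_prob)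
  show "0 < eta" by (rule eta_pos)
  fix t assume t: "t < T"
  show "(\<lambda>g. L g (D t)) \<in> borel_measurable pi1"
    using measurable_Pair1[OF meas_avg Dm_space'[OF D t]] pi1_sets by (simp cong: measurable_cong_sets)
  fix g assume "g \<in> space pi1"
  then show "0 \<le> L g (D t) \<and> L g (D t) \<le> C"
    using alg_bounded Dm_space[OF D t] sp_pi1 by auto
qed

lemma wj_eq: "D \<in> space Dm \<Longrightarrow> ewa_setup.w pi1 eta L D t g = wj t D g"
  using ewa_setup.w_def[OF ewa_inst] ewa_setup.Z_def[OF ewa_inst] ewa_setup.V_def[OF ewa_inst] ewa_setup.lt_def[OF ewa_inst]
  unfolding wj_def Zj_def Vj_def by simp

lemma Vj_meas: "t \<le> T \<Longrightarrow> (\<lambda>(D, g). Vj t D g) \<in> borel_measurable (Dm \<Otimes>\<^sub>M pi1)"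
proof -
  assume t: "t \<le> T"
  have "(\<lambda>x. (\<lambda>(g, S). L g S) (snd x, fst x s)) \<in> borel_measurable (Dm \<Otimes>\<^sub>M pi1)" if s: "s < T" for s
  proof (rule measurable_compose[OF _ Lm_pi1])
    show "(\<lambda>x. (snd x, fst x s)) \<in> Dm \<Otimes>\<^sub>M pi1 \<rightarrow>\<^sub>M pi1 \<Otimes>\<^sub>M W"
    proof -
      have s': "s \<in> {..<T}" using s by simp
      show ?thesis unfolding Dm_def using s' by measurable
    qed
  qed
  then show ?thesis unfolding Vj_def using t
    by (subst measurable_cong[where g="\<lambda>x. \<Sum>s<t. (\<lambda>(g, S). L g S) (snd x, fst x s)"]) (auto intro!: borel_measurable_sum)
qed

lemma wj_meas: "t \<le> T \<Longrightarrow> (\<lambda>(D, g). wj t D g) \<in> borel_measurable (Dm \<Otimes>\<^sub>M pi1)"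
proof -
  assume t: "t \<le> T"
  interpret pi1: prob_space pi1 by (rule pi1_prob)
  note Vj_meas[OF t, measurable]
  have "(\<lambda>D. Zj t D) \<in> borel_measurable Dm" unfolding Zj_def by measurable
  note this[measurable]
  show ?thesis unfolding wj_def[abs_def] by measurable
qed

end

context thm5 begin

definition "NN g = (\<integral>\<^sup>+y. ennreal (L g y) \<partial>W)"

lemma NN_meas: "NN \<in> borel_measurable pi1"
proof -
  interpret W: prob_space W by (rule W_prob)
  have "(\<lambda>(g, y). ennreal (L g y)) \<in> borel_measurable (pi1 \<Otimes>\<^sub>M W)" using Lm_pi1 by measurable
  then show ?thesis unfolding NN_def[abs_def] by (rule W.borel_measurable_nn_integral)
qed

lemma NN_NTR: "g \<in> space Gm \<Longrightarrow> new_task_risk Q alg l m g = NN g"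
  unfolding NN_def by (rule NTR_eq)

lemma ewa_sets: "D \<in> space Dm \<Longrightarrow> t < T \<Longrightarrow> sets (ewa pi1 eta L D t) = sets pi1"
  using ewa_setup.ewa_dens[OF ewa_inst, of D t] by simp

lemma ewa_prob: "D \<in> space Dm \<Longrightarrow> t < T \<Longrightarrow> prob_space (ewa pi1 eta L D t)"
  using ewa_setup.ewa_dens[OF ewa_inst, of D t] ewa_setup.prob_pit[OF ewa_inst, of D t] by simp

lemma step2:
  assumes D: "D \<in> space Dm" and t: "t < T" and f: "f \<in> borel_measurable pi1"
  shows "(\<integral>\<^sup>+g. f g \<partial>ewa pi1 eta L D t) = (\<integral>\<^sup>+g. ennreal (wj t D g) * f g \<partial>pi1)"
proof -
  interpret E: ewa_setup pi1 eta C L D T by (rule ewa_inst[OF D])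
  have "(\<integral>\<^sup>+g. f g \<partial>ewa pi1 eta L D t) = (\<integral>\<^sup>+g. ennreal (E.w t g) * f g \<partial>pi1)"
    using t by (simp add: E.ewa_dens) (rule nn_integral_density, use E.w_meas[of t] f in auto)
  then show ?thesis by (simp add: wj_eq[OF D])
qed

lemma step1:
  assumes D: "D \<in> space Dm"
  shows "(\<integral>\<^sup>+G. (\<Sum>t<T. new_task_risk Q alg l m (G t)) / of_nat T \<partial>PiM {..<T} (\<lambda>t. ewa pi1 eta L D t))
       = (\<Sum>t<T. \<integral>\<^sup>+g. NN g \<partial>ewa pi1 eta L D t) / of_nat T"
proof -
  define M' where "M' t = (if t < T then ewa pi1 eta L D t else pi1)" for t
  have M'p: "prob_space (M' t)" for t unfolding M'_def using ewa_prob[OF D] pi1_prob by auto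
  have M's: "sets (M' t) = sets pi1" for t unfolding M'_def using ewa_sets[OF D] by auto
  have M'sp: "space (M' t) = space Gm" for t using M's[of t] pi1_sets by (metis sets_eq_imp_space_eq)
  have NNm: "NN \<in> borel_measurable (M' t)" for t using NN_meas M's[of t] by (simp cong: measurable_cong_sets)
  have cm: "(\<lambda>G. NN (G t)) \<in> borel_measurable (PiM {..<T} M')" if "t < T" for t
    by (rule measurable_compose[OF measurable_component_singleton[where M=M' and i=t] NNm[of t]]) (use that in simp)
  have PiMeq: "PiM {..<T} (\<lambda>t. ewa pi1 eta L D t) = PiM {..<T} M'"
    by (rule PiM_cong) (auto simp: M'_def)
  have "(\<integral>\<^sup>+G. (\<Sum>t<T. new_task_risk Q alg l m (G t)) / of_nat T \<partial>PiM {..<T} M')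
      = (\<integral>\<^sup>+G. (\<Sum>t<T. NN (G t)) / of_nat T \<partial>PiM {..<T} M')"
  proof (rule nn_integral_cong)
    fix G assume "G \<in> space (PiM {..<T} M')"
    then have "G t \<in> space Gm" if "t < T" for t using that M'sp by (auto simp: space_PiM PiE_iff)
    then show "(\<Sum>t<T. new_task_risk Q alg l m (G t)) / of_nat T = (\<Sum>t<T. NN (G t)) / of_nat T"
      by (simp add: NN_NTR)
  qed
  also have "\<dots> = (\<integral>\<^sup>+G. (\<Sum>t<T. NN (G t)) \<partial>PiM {..<T} M') / of_nat T"
    by (rule nn_integral_divide) (intro borel_measurable_sum cm; simp)
  also have "(\<integral>\<^sup>+G. (\<Sum>t<T. NN (G t)) \<partial>PiM {..<T} M') = (\<Sum>t<T. \<integral>\<^sup>+G. NN (G t) \<partial>PiM {..<T} M')"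
    by (rule nn_integral_sum) (intro cm; simp)
  also have "\<dots> = (\<Sum>t<T. \<integral>\<^sup>+g. NN g \<partial>M' t)"
    by (intro sum.cong refl PiM_marg M'p NNm) auto
  also have "\<dots> = (\<Sum>t<T. \<integral>\<^sup>+g. NN g \<partial>ewa pi1 eta L D t)"
    by (intro sum.cong refl) (simp add: M'_def)
  finally show ?thesis unfolding PiMeq .
qed

lemma wj_upd: "wj t (D(t := y)) g = wj t D g"
proof -
  have "Vj t (D(t := y)) g' = Vj t D g'" for g'
    unfolding Vj_def
  proof (rule sum.cong[OF refl])
    fix s assume "s \<in> {..<t}" then have "s \<noteq> t" by simp
    then show "L g' ((D(t := y)) s) = L g' (D s)" by simp
  qed
  then show ?thesis unfolding wj_def Zj_def by simp
qed

lemma fubini_inner: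
  assumes D: "D \<in> space Dm" and t: "t < T"
  shows "(\<integral>\<^sup>+y. (\<integral>\<^sup>+g. ennreal (wj t D g) * ennreal (L g y) \<partial>pi1) \<partial>W) = (\<integral>\<^sup>+g. ennreal (wj t D g) * NN g \<partial>pi1)"
proof -
  interpret pi1: prob_space pi1 by (rule pi1_prob)
  interpret W: prob_space W by (rule W_prob)
  interpret pr: pair_sigma_finite W pi1 by unfold_locales
  have wm: "wj t D \<in> borel_measurable pi1"
    using measurable_Pair2[OF wj_meas D] t by simp
  have "(\<lambda>(y, g). ennreal (wj t D g) * ennreal ((\<lambda>(g, S). L g S) (g, y))) \<in> borel_measurable (W \<Otimes>\<^sub>M pi1)"
  proof -
    have "(\<lambda>x. (\<lambda>(g, S). L g S) (snd x, fst x)) \<in> borel_measurable (W \<Otimes>\<^sub>M pi1)"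
      by (rule measurable_compose[OF _ Lm_pi1]) measurable
    then show ?thesis using wm by (simp add: case_prod_beta') measurable
  qed
  then have fm: "(\<lambda>(y, g). ennreal (wj t D g) * ennreal (L g y)) \<in> borel_measurable (W \<Otimes>\<^sub>M pi1)" by simp
  have "(\<integral>\<^sup>+y. (\<integral>\<^sup>+g. ennreal (wj t D g) * ennreal (L g y) \<partial>pi1) \<partial>W) = (\<integral>\<^sup>+g. (\<integral>\<^sup>+y. ennreal (wj t D g) * ennreal (L g y) \<partial>W) \<partial>pi1)"
    by (rule pr.Fubini'[OF fm, symmetric])
  also have "\<dots> = (\<integral>\<^sup>+g. ennreal (wj t D g) * NN g \<partial>pi1)"
  proof (rule nn_integral_cong)
    fix g assume g: "g \<in> space pi1"
    have "(\<lambda>y. ennreal (L g y)) \<in> borel_measurable W" using measurable_Pair2[OF Lm_pi1 g] by simp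
    then show "(\<integral>\<^sup>+y. ennreal (wj t D g) * ennreal (L g y) \<partial>W) = ennreal (wj t D g) * NN g"
      unfolding NN_def by (rule nn_integral_cmult)
  qed
  finally show ?thesis .
qed

lemma step3:
  assumes t: "t < T"
  shows "(\<integral>\<^sup>+D. (\<integral>\<^sup>+g. ennreal (wj t D g) * NN g \<partial>pi1) \<partial>Dm)
       = (\<integral>\<^sup>+D. (\<integral>\<^sup>+g. ennreal (wj t D g) * ennreal (L g (D t)) \<partial>pi1) \<partial>Dm)"
proof -
  interpret pi1: prob_space pi1 by (rule pi1_prob)
  define phi where "phi D y = (\<integral>\<^sup>+g. ennreal (wj t D g) * ennreal (L g y) \<partial>pi1)" for D y
  have m1: "(\<lambda>x. (\<lambda>(D, g). wj t D g) (fst (fst x), snd x)) \<in> borel_measurable ((Dm \<Otimes>\<^sub>M W) \<Otimes>\<^sub>M pi1)"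
    by (rule measurable_compose[OF _ wj_meas[OF less_imp_le[OF t]]]) measurable
  have m2: "(\<lambda>x. (\<lambda>(g, S). L g S) (snd x, snd (fst x))) \<in> borel_measurable ((Dm \<Otimes>\<^sub>M W) \<Otimes>\<^sub>M pi1)"
    by (rule measurable_compose[OF _ Lm_pi1]) measurable
  have "(\<lambda>(x, g). ennreal (wj t (fst x) g) * ennreal (L g (snd x))) \<in> borel_measurable ((Dm \<Otimes>\<^sub>M W) \<Otimes>\<^sub>M pi1)"
    using m1 m2 by (simp add: case_prod_beta') measurable
  from pi1.borel_measurable_nn_integral[OF this]
  have pm: "(\<lambda>(D, y). phi D y) \<in> borel_measurable (PiM {..<T} (\<lambda>_. W) \<Otimes>\<^sub>M W)"
    unfolding phi_def Dm_def by (simp add: case_prod_beta')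
  have "(\<integral>\<^sup>+D. phi D (D t) \<partial>PiM {..<T} (\<lambda>_. W)) = (\<integral>\<^sup>+D. (\<integral>\<^sup>+y. phi D y \<partial>W) \<partial>PiM {..<T} (\<lambda>_. W))"
    by (rule PiM_exch[OF W_prob _ _ pm]) (use t in \<open>auto simp: phi_def wj_upd\<close>)
  also have "\<dots> = (\<integral>\<^sup>+D. (\<integral>\<^sup>+g. ennreal (wj t D g) * NN g \<partial>pi1) \<partial>PiM {..<T} (\<lambda>_. W))"
    by (intro nn_integral_cong) (unfold phi_def, rule fubini_inner[OF _ t], simp add: Dm_def)
  finally show ?thesis unfolding phi_def Dm_def by simp
qed

lemma KL_nonneg:
  assumes rp: "prob_space rho" and rs: "sets rho = sets pi1"
    and ac: "absolutely_continuous pi1 rho" and int: "integrable rho (entropy_density (exp 1) pi1 rho)"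
  shows "0 \<le> KL_divergence (exp 1) pi1 rho"
  using gibbs[OF pi1_prob rp rs ac int, of "\<lambda>_. 0" 0] by (simp add: prob_space.prob_space[OF pi1_prob])

lemma step4:
  assumes D: "D \<in> space Dm" and rp: "prob_space rho" and rs: "sets rho = sets pi1"
    and ac: "absolutely_continuous pi1 rho" and int: "integrable rho (entropy_density (exp 1) pi1 rho)"
  shows "(\<Sum>t<T. \<integral>\<^sup>+g. ennreal (L g (D t)) \<partial>ewa pi1 eta L D t)
     \<le> (\<Sum>t<T. \<integral>\<^sup>+g. ennreal (L g (D t)) \<partial>rho) + ennreal (T * eta * C\<^sup>2 / 8 + KL_divergence (exp 1) pi1 rho / eta)"
proof -
  interpret E: ewa_setup pi1 eta C L D T by (rule ewa_inst[OF D])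
  interpret R: prob_space rho by (rule rp)
  have spr: "space rho = space pi1" using rs by (rule sets_eq_imp_space_eq)
  have C0: "0 \<le> C" using E.C_nonneg T_pos by simp
  have a: "(\<integral>\<^sup>+g. ennreal (L g (D t)) \<partial>ewa pi1 eta L D t) = ennreal (E.E t)" if t: "t < T" for t
  proof -
    have "(\<integral>\<^sup>+g. ennreal (L g (D t)) \<partial>ewa pi1 eta L D t) = (\<integral>\<^sup>+g. ennreal (E.w t g * E.lt t g) \<partial>pi1)"
    proof -
      have lm: "(\<lambda>g. ennreal (L g (D t))) \<in> borel_measurable pi1" using E.ltm[OF t] unfolding E.lt_def[abs_def] by simp
      show ?thesis unfolding step2[OF D t lm]
      proof (intro nn_integral_cong)
        fix x assume x: "x \<in> space pi1"
        have "0 \<le> E.w t x" using E.w_nonneg[of t] t by simp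
        moreover have "0 \<le> E.lt t x" using E.lt_bnd'[OF t x] by simp
        ultimately show "ennreal (wj t D x) * ennreal (L x (D t)) = ennreal (E.w t x * E.lt t x)"
          by (simp add: ennreal_mult wj_eq[OF D, symmetric] E.lt_def)
      qed
    qed
    also have "\<dots> = ennreal (E.E t)" unfolding E.E_def
    proof (rule nn_integral_eq_integral)
      show "integrable pi1 (\<lambda>g. E.w t g * E.lt t g)"
        by (rule E.int_wf[where B=C]) (use t E.ltm[OF t] E.lt_bnd'[OF t] in auto)
      show "AE x in pi1. 0 \<le> E.w t x * E.lt t x"
        using E.w_nonneg[of t] E.lt_bnd'[OF t] t by (intro AE_I2) auto
    qed
    finally show ?thesis .
  qed
  have intlt: "integrable rho (E.lt t)" if t: "t < T" for t
  proof (rule R.integrable_const_bound[where B=C])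
    show "AE x in rho. norm (E.lt t x) \<le> C" using E.lt_bnd'[OF t] spr by (intro AE_I2) auto
    show "E.lt t \<in> borel_measurable rho" using E.ltm[OF t] rs by (simp cong: measurable_cong_sets)
  qed
  have b: "(\<integral>\<^sup>+g. ennreal (L g (D t)) \<partial>rho) = ennreal (\<integral>g. E.lt t g \<partial>rho)" if t: "t < T" for t
    unfolding E.lt_def[symmetric]
    by (rule nn_integral_eq_integral[OF intlt[OF t]]) (use E.lt_bnd'[OF t] spr in \<open>auto intro!: AE_I2\<close>)
  have Enn: "0 \<le> E.E t" if t: "t < T" for t
    unfolding E.E_def using E.w_nonneg[of t] E.lt_bnd'[OF t] t by (intro integral_nonneg_AE AE_I2) auto
  have rnn: "0 \<le> (\<integral>g. E.lt t g \<partial>rho)" if t: "t < T" for t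
    using E.lt_bnd'[OF t] spr by (intro integral_nonneg_AE AE_I2) auto
  have KL0: "0 \<le> KL_divergence (exp 1) pi1 rho" by (rule KL_nonneg[OF rp rs ac int])
  have cnn: "0 \<le> T * eta * C\<^sup>2 / 8 + KL_divergence (exp 1) pi1 rho / eta"
    using eta_pos KL0 by (intro add_nonneg_nonneg) auto
  have "(\<Sum>t<T. \<integral>\<^sup>+g. ennreal (L g (D t)) \<partial>ewa pi1 eta L D t) = ennreal (\<Sum>t<T. E.E t)"
  proof -
    have "(\<Sum>t<T. \<integral>\<^sup>+g. ennreal (L g (D t)) \<partial>ewa pi1 eta L D t) = (\<Sum>t<T. ennreal (E.E t))"
      using a by (intro sum.cong) auto
    also have "\<dots> = ennreal (\<Sum>t<T. E.E t)" by (rule sum_ennreal) (use Enn in auto)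
    finally show ?thesis .
  qed
  also have "\<dots> \<le> ennreal ((\<Sum>t<T. \<integral>g. E.lt t g \<partial>rho) + (T * eta * C\<^sup>2 / 8 + KL_divergence (exp 1) pi1 rho / eta))"
    using E.ewa_regret[OF rp rs ac int] by (intro ennreal_leI) (simp add: algebra_simps)
  also have "\<dots> = ennreal (\<Sum>t<T. \<integral>g. E.lt t g \<partial>rho) + ennreal (T * eta * C\<^sup>2 / 8 + KL_divergence (exp 1) pi1 rho / eta)"
    using cnn rnn by (intro ennreal_plus sum_nonneg) auto
  also have "ennreal (\<Sum>t<T. \<integral>g. E.lt t g \<partial>rho) = (\<Sum>t<T. \<integral>\<^sup>+g. ennreal (L g (D t)) \<partial>rho)"
  proof -
    have "ennreal (\<Sum>t<T. \<integral>g. E.lt t g \<partial>rho) = (\<Sum>t<T. ennreal (\<integral>g. E.lt t g \<partial>rho))"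
      by (rule sum_ennreal[symmetric]) (use rnn in auto)
    also have "\<dots> = (\<Sum>t<T. \<integral>\<^sup>+g. ennreal (L g (D t)) \<partial>rho)"
      using b by (intro sum.cong) auto
    finally show ?thesis .
  qed
  finally show ?thesis .
qed

lemma step5:
  assumes t: "t < T" and rp: "prob_space rho" and rs: "sets rho = sets pi1"
  shows "(\<integral>\<^sup>+D. (\<integral>\<^sup>+g. ennreal (L g (D t)) \<partial>rho) \<partial>Dm) = (\<integral>\<^sup>+g. NN g \<partial>rho)"
proof -
  interpret R: prob_space rho by (rule rp)
  interpret W: prob_space W by (rule W_prob)
  interpret Dp: prob_space Dm by (rule Dm_prob)
  interpret pr: pair_sigma_finite rho W by unfold_locales
  have Lr: "(\<lambda>(g, S). L g S) \<in> borel_measurable (rho \<Otimes>\<^sub>M W)"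
    using Lm_pi1 rs by (simp cong: measurable_cong_sets add: sets_pair_measure_cong[OF rs refl])
  define phi where "phi (D::nat \<Rightarrow> nat \<Rightarrow> 'x \<times> 'y) y = (\<integral>\<^sup>+g. ennreal (L g y) \<partial>rho)" for D y
  have m2: "(\<lambda>x. (\<lambda>(g, S). L g S) (snd x, snd (fst x))) \<in> borel_measurable ((Dm \<Otimes>\<^sub>M W) \<Otimes>\<^sub>M rho)"
    by (rule measurable_compose[OF _ Lr]) measurable
  have "(\<lambda>(x, g). ennreal (L g (snd x))) \<in> borel_measurable ((Dm \<Otimes>\<^sub>M W) \<Otimes>\<^sub>M rho)"
    using m2 by (simp add: case_prod_beta') measurable
  from R.borel_measurable_nn_integral[OF this]
  have pm: "(\<lambda>(D, y). phi D y) \<in> borel_measurable (PiM {..<T} (\<lambda>_. W) \<Otimes>\<^sub>M W)"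
    unfolding phi_def Dm_def by (simp add: case_prod_beta')
  have "(\<integral>\<^sup>+D. phi D (D t) \<partial>PiM {..<T} (\<lambda>_. W)) = (\<integral>\<^sup>+D. (\<integral>\<^sup>+y. phi D y \<partial>W) \<partial>PiM {..<T} (\<lambda>_. W))"
    by (rule PiM_exch[OF W_prob _ _ pm]) (use t in \<open>auto simp: phi_def\<close>)
  also have "\<dots> = (\<integral>\<^sup>+y. (\<integral>\<^sup>+g. ennreal (L g y) \<partial>rho) \<partial>W)"
    using Dp.emeasure_space_1 unfolding phi_def Dm_def by simp
  also have "\<dots> = (\<integral>\<^sup>+g. (\<integral>\<^sup>+y. ennreal (L g y) \<partial>W) \<partial>rho)"
  proof (rule pr.Fubini')
    show "(\<lambda>(g, y). ennreal (L g y)) \<in> borel_measurable (rho \<Otimes>\<^sub>M W)"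
      using Lr by measurable
  qed
  finally show ?thesis unfolding phi_def Dm_def NN_def by simp
qed

end

context thm5 begin

lemma divT: "x / (of_nat T :: ennreal) = x * ennreal (1 / real T)"
  using T_pos by (simp add: divide_ennreal_def inverse_ennreal ennreal_of_nat_eq_real_of_nat inverse_eq_divide)

lemma M1: "t < T \<Longrightarrow> (\<lambda>D. \<integral>\<^sup>+g. ennreal (wj t D g) * NN g \<partial>pi1) \<in> borel_measurable Dm"
proof -
  assume t: "t < T"
  interpret pi1: prob_space pi1 by (rule pi1_prob)
  have a: "(\<lambda>x. (\<lambda>(D, g). wj t D g) x) \<in> borel_measurable (Dm \<Otimes>\<^sub>M pi1)" using wj_meas[OF less_imp_le[OF t]] by simp
  have b: "(\<lambda>x. NN (snd x)) \<in> borel_measurable (Dm \<Otimes>\<^sub>M pi1)" by (rule measurable_compose[OF _ NN_meas]) measurable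
  have "(\<lambda>(D, g). ennreal (wj t D g) * NN g) \<in> borel_measurable (Dm \<Otimes>\<^sub>M pi1)"
    using a b by (simp add: case_prod_beta') measurable
  then show ?thesis by (rule pi1.borel_measurable_nn_integral)
qed

lemma M2: "t < T \<Longrightarrow> (\<lambda>D. \<integral>\<^sup>+g. ennreal (wj t D g) * ennreal (L g (D t)) \<partial>pi1) \<in> borel_measurable Dm"
proof -
  assume t: "t < T"
  interpret pi1: prob_space pi1 by (rule pi1_prob)
  have a: "(\<lambda>x. (\<lambda>(D, g). wj t D g) x) \<in> borel_measurable (Dm \<Otimes>\<^sub>M pi1)" using wj_meas[OF less_imp_le[OF t]] by simp
  have t': "t \<in> {..<T}" using t by simp
  have b: "(\<lambda>x. (\<lambda>(g, S). L g S) (snd x, fst x t)) \<in> borel_measurable (Dm \<Otimes>\<^sub>M pi1)"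
    by (rule measurable_compose[OF _ Lm_pi1]) (unfold Dm_def, use t' in measurable)
  have "(\<lambda>(D, g). ennreal (wj t D g) * ennreal (L g (D t))) \<in> borel_measurable (Dm \<Otimes>\<^sub>M pi1)"
    using a b by (simp add: case_prod_beta') measurable
  then show ?thesis by (rule pi1.borel_measurable_nn_integral)
qed

lemma M3: "t < T \<Longrightarrow> prob_space rho \<Longrightarrow> sets rho = sets pi1 \<Longrightarrow>
    (\<lambda>D. \<integral>\<^sup>+g. ennreal (L g (D t)) \<partial>rho) \<in> borel_measurable Dm"
proof -
  assume t: "t < T" and rp: "prob_space rho" and rs: "sets rho = sets pi1"
  interpret R: prob_space rho by (rule rp)
  have Lr: "(\<lambda>(g, S). L g S) \<in> borel_measurable (rho \<Otimes>\<^sub>M W)"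
    using Lm_pi1 rs by (simp cong: measurable_cong_sets add: sets_pair_measure_cong[OF rs refl])
  have t': "t \<in> {..<T}" using t by simp
  have b: "(\<lambda>x. (\<lambda>(g, S). L g S) (snd x, fst x t)) \<in> borel_measurable (Dm \<Otimes>\<^sub>M rho)"
    by (rule measurable_compose[OF _ Lr]) (unfold Dm_def, use t' in measurable)
  have "(\<lambda>(D, g). ennreal (L g (D t))) \<in> borel_measurable (Dm \<Otimes>\<^sub>M rho)"
    using b by (simp add: case_prod_beta') measurable
  then show ?thesis by (rule R.borel_measurable_nn_integral)
qed

lemma main_ennreal:
  assumes rp: "prob_space rho" and rs: "sets rho = sets pi1"
    and ac: "absolutely_continuous pi1 rho" and int: "integrable rho (entropy_density (exp 1) pi1 rho)"
  shows "meta_risk Q alg l m T pi1 eta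
    \<le> (\<integral>\<^sup>+g. NN g \<partial>rho) + ennreal (eta * C\<^sup>2 / 8 + KL_divergence (exp 1) pi1 rho / (eta * T))"
proof -
  interpret Dp: prob_space Dm by (rule Dm_prob)
  let ?K = "KL_divergence (exp 1) pi1 rho"
  let ?c = "ennreal (T * eta * C\<^sup>2 / 8 + ?K / eta)"
  let ?iT = "ennreal (1 / real T)"
  have NNm: "NN \<in> borel_measurable pi1" by (rule NN_meas)
  have meta: "meta_risk Q alg l m T pi1 eta = (\<integral>\<^sup>+D. (\<integral>\<^sup>+G. (\<Sum>t<T. new_task_risk Q alg l m (G t)) / of_nat T
        \<partial>PiM {..<T} (\<lambda>t. ewa pi1 eta L D t)) \<partial>Dm)"
    unfolding meta_risk_def Dm_def W_def ..
  also have "\<dots> = (\<integral>\<^sup>+D. (\<Sum>t<T. \<integral>\<^sup>+g. ennreal (wj t D g) * NN g \<partial>pi1) * ?iT \<partial>Dm)"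
  proof (intro nn_integral_cong)
    fix D assume D: "D \<in> space Dm"
    have "(\<Sum>t<T. \<integral>\<^sup>+g. NN g \<partial>ewa pi1 eta L D t) = (\<Sum>t<T. \<integral>\<^sup>+g. ennreal (wj t D g) * NN g \<partial>pi1)"
      by (intro sum.cong refl step2[OF D _ NNm]) simp
    then show "(\<integral>\<^sup>+G. (\<Sum>t<T. new_task_risk Q alg l m (G t)) / of_nat T \<partial>PiM {..<T} (\<lambda>t. ewa pi1 eta L D t))
       = (\<Sum>t<T. \<integral>\<^sup>+g. ennreal (wj t D g) * NN g \<partial>pi1) * ?iT"
      unfolding step1[OF D] unfolding divT by simp
  qed
  also have "\<dots> = (\<integral>\<^sup>+D. (\<Sum>t<T. \<integral>\<^sup>+g. ennreal (wj t D g) * NN g \<partial>pi1) \<partial>Dm) * ?iT"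
    by (rule nn_integral_multc) (intro borel_measurable_sum M1; simp)
  also have "(\<integral>\<^sup>+D. (\<Sum>t<T. \<integral>\<^sup>+g. ennreal (wj t D g) * NN g \<partial>pi1) \<partial>Dm)
      = (\<Sum>t<T. \<integral>\<^sup>+D. (\<integral>\<^sup>+g. ennreal (wj t D g) * NN g \<partial>pi1) \<partial>Dm)"
    by (rule nn_integral_sum) (intro M1; simp)
  also have "\<dots> = (\<Sum>t<T. \<integral>\<^sup>+D. (\<integral>\<^sup>+g. ennreal (wj t D g) * ennreal (L g (D t)) \<partial>pi1) \<partial>Dm)"
    by (intro sum.cong refl step3) simp
  also have "\<dots> = (\<integral>\<^sup>+D. (\<Sum>t<T. \<integral>\<^sup>+g. ennreal (wj t D g) * ennreal (L g (D t)) \<partial>pi1) \<partial>Dm)"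
    by (rule nn_integral_sum[symmetric]) (intro M2; simp)
  also have "\<dots> = (\<integral>\<^sup>+D. (\<Sum>t<T. \<integral>\<^sup>+g. ennreal (L g (D t)) \<partial>ewa pi1 eta L D t) \<partial>Dm)"
  proof (intro nn_integral_cong sum.cong refl)
    fix D t assume D: "D \<in> space Dm" and t: "t \<in> {..<T}"
    have lm: "(\<lambda>g. ennreal (L g (D t))) \<in> borel_measurable pi1"
      using ewa_setup.ltm[OF ewa_inst[OF D], of t] t unfolding ewa_setup.lt_def[OF ewa_inst[OF D], abs_def] by simp
    show "(\<integral>\<^sup>+g. ennreal (wj t D g) * ennreal (L g (D t)) \<partial>pi1) = (\<integral>\<^sup>+g. ennreal (L g (D t)) \<partial>ewa pi1 eta L D t)"
      using step2[OF D _ lm] t by simp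
  qed
  also have "\<dots> \<le> (\<integral>\<^sup>+D. (\<Sum>t<T. \<integral>\<^sup>+g. ennreal (L g (D t)) \<partial>rho) + ?c \<partial>Dm)"
    by (intro nn_integral_mono step4[OF _ rp rs ac int])
  also have "\<dots> = (\<integral>\<^sup>+D. (\<Sum>t<T. \<integral>\<^sup>+g. ennreal (L g (D t)) \<partial>rho) \<partial>Dm) + ?c"
    by (rule nn_integral_add_const_prob[OF Dm_prob]) (intro borel_measurable_sum M3[OF _ rp rs]; simp)
  also have "(\<integral>\<^sup>+D. (\<Sum>t<T. \<integral>\<^sup>+g. ennreal (L g (D t)) \<partial>rho) \<partial>Dm) = (\<Sum>t<T. \<integral>\<^sup>+D. (\<integral>\<^sup>+g. ennreal (L g (D t)) \<partial>rho) \<partial>Dm)"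
    by (rule nn_integral_sum) (intro M3[OF _ rp rs]; simp)
  also have "\<dots> = (\<Sum>t<T. \<integral>\<^sup>+g. NN g \<partial>rho)"
    by (intro sum.cong refl step5[OF _ rp rs]) simp
  also have "\<dots> = of_nat T * (\<integral>\<^sup>+g. NN g \<partial>rho)" by simp
  finally have le: "meta_risk Q alg l m T pi1 eta \<le> (of_nat T * (\<integral>\<^sup>+g. NN g \<partial>rho) + ?c) * ?iT"
    by (simp add: mult_right_mono)
  have KL0: "0 \<le> ?K" by (rule KL_nonneg[OF rp rs ac int])
  have "(of_nat T * (\<integral>\<^sup>+g. NN g \<partial>rho) + ?c) * ?iT = (\<integral>\<^sup>+g. NN g \<partial>rho) * (of_nat T * ?iT) + ?c * ?iT"
  proof -
    have "(of_nat T * (\<integral>\<^sup>+g. NN g \<partial>rho) + ?c) * ?iT = (of_nat T * (\<integral>\<^sup>+g. NN g \<partial>rho)) * ?iT + ?c * ?iT"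
      by (rule distrib_right)
    moreover have "(of_nat T * (\<integral>\<^sup>+g. NN g \<partial>rho)) * ?iT = (\<integral>\<^sup>+g. NN g \<partial>rho) * (of_nat T * ?iT)"
      by (metis mult.assoc mult.commute)
    ultimately show ?thesis by simp
  qed
  also have "of_nat T * ?iT = 1"
    using T_pos by (simp add: ennreal_of_nat_eq_real_of_nat ennreal_mult[symmetric])
  also have "?c * ?iT = ennreal (eta * C\<^sup>2 / 8 + ?K / (eta * T))"
    using T_pos eta_pos KL0 by (simp add: ennreal_mult[symmetric] field_simps)
  finally show ?thesis using le by simp
qed

end

context thm5 begin

lemma expect_ge:
  assumes rs: "sets rho = sets Gm"
  shows "enn2ereal (\<integral>\<^sup>+g. NN g \<partial>rho)
    \<le> ereal_expect rho (\<lambda>g. enn2ereal (oracle_risk Q H l g) + ereal (beta g m))"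
proof -
  let ?f = "\<lambda>g. enn2ereal (oracle_risk Q H l g) + ereal (beta g m)"
  have sp: "space rho = space Gm" using rs by (rule sets_eq_imp_space_eq)
  have pt: "enn2ereal (NN g) \<le> ?f g" if "g \<in> space rho" for g
    using NTR_le_ereal[of g] NN_NTR[of g] that sp by simp
  have "(\<integral>\<^sup>+ x. e2ennreal (- ?f x) \<partial>rho) = (\<integral>\<^sup>+ x. 0 \<partial>rho)"
  proof (rule nn_integral_cong)
    fix x assume x: "x \<in> space rho"
    have "0 \<le> ?f x" using pt[OF x] enn2ereal_nonneg[of "NN x"] by (rule_tac order_trans) auto
    then show "e2ennreal (- ?f x) = 0" by (intro e2ennreal_neg) simp
  qed
  then have neg: "(\<integral>\<^sup>+ x. e2ennreal (- ?f x) \<partial>rho) = 0" by simp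
  have "(\<integral>\<^sup>+g. NN g \<partial>rho) \<le> (\<integral>\<^sup>+ x. e2ennreal (?f x) \<partial>rho)"
  proof (rule nn_integral_mono)
    fix x assume x: "x \<in> space rho"
    have "e2ennreal (enn2ereal (NN x)) \<le> e2ennreal (?f x)" by (rule e2ennreal_mono[OF pt[OF x]])
    then show "NN x \<le> e2ennreal (?f x)" by simp
  qed
  then have "enn2ereal (\<integral>\<^sup>+g. NN g \<partial>rho) \<le> enn2ereal (\<integral>\<^sup>+ x. e2ennreal (?f x) \<partial>rho)"
    by (simp add: less_eq_ennreal.rep_eq)
  then show ?thesis unfolding ereal_expect_def neg by (simp add: zero_ennreal.rep_eq)
qed

lemma final_bound:
  assumes rp: "prob_space rho" and rs: "sets rho = sets Gm"
  shows "enn2ereal (meta_risk Q alg l m T pi1 eta)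
     \<le> ereal_expect rho (\<lambda>g. enn2ereal (oracle_risk Q H l g) + ereal (beta g m))
          + ereal (eta * C\<^sup>2 / 8)
          + KL rho pi1 / ereal (eta * real T)"
proof (cases "absolutely_continuous pi1 rho \<and> integrable rho (entropy_density (exp 1) pi1 rho)")
  case False
  then have "KL rho pi1 = \<infinity>" unfolding KL_def by simp
  moreover have "0 < eta * real T" using eta_pos T_pos by simp
  ultimately show ?thesis by simp
next
  case True
  then have ac: "absolutely_continuous pi1 rho" and int: "integrable rho (entropy_density (exp 1) pi1 rho)" by auto
  have rs': "sets rho = sets pi1" using rs pi1_sets by simp
  let ?K = "KL_divergence (exp 1) pi1 rho"
  have KL: "KL rho pi1 = ereal ?K" unfolding KL_def using True by simp
  have KL0: "0 \<le> ?K" by (rule KL_nonneg[OF rp rs' ac int])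
  have cnn: "0 \<le> eta * C\<^sup>2 / 8 + ?K / (eta * T)" using eta_pos KL0 T_pos by simp
  have "enn2ereal (meta_risk Q alg l m T pi1 eta) \<le> enn2ereal ((\<integral>\<^sup>+g. NN g \<partial>rho) + ennreal (eta * C\<^sup>2 / 8 + ?K / (eta * T)))"
    using main_ennreal[OF rp rs' ac int] by (simp add: less_eq_ennreal.rep_eq)
  also have "\<dots> = enn2ereal (\<integral>\<^sup>+g. NN g \<partial>rho) + ereal (eta * C\<^sup>2 / 8 + ?K / (eta * T))"
    using cnn by (simp add: plus_ennreal.rep_eq)
  also have "\<dots> \<le> ereal_expect rho (\<lambda>g. enn2ereal (oracle_risk Q H l g) + ereal (beta g m))
      + ereal (eta * C\<^sup>2 / 8 + ?K / (eta * T))"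
    by (intro add_right_mono expect_ge[OF rs])
  also have "ereal (eta * C\<^sup>2 / 8 + ?K / (eta * T)) = ereal (eta * C\<^sup>2 / 8) + KL rho pi1 / ereal (eta * real T)"
    unfolding KL using eta_pos T_pos by simp
  finally show ?thesis by (simp add: add.assoc)
qed

end


theorem theorem5:
  fixes XY :: "('x \<times> 'y) measure"
    and Gm :: "('x \<Rightarrow> 'z) measure"
    and H :: "('z \<Rightarrow> real) set"
    and l :: "real \<Rightarrow> 'y \<Rightarrow> real"
    and alg :: "('x \<Rightarrow> 'z) \<Rightarrow> ('x \<times> 'y) list \<Rightarrow> ('z \<Rightarrow> real)"
    and beta :: "('x \<Rightarrow> 'z) \<Rightarrow> nat \<Rightarrow> real"
    and C eta :: real
    and m T :: nat
    and Q :: "('x \<times> 'y) measure measure"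
    and pi1 :: "('x \<Rightarrow> 'z) measure"
  assumes m_pos: "0 < m" and T_pos: "0 < T" and eta_pos: "0 < eta"
    and loss_nonneg: "\<And>u y. 0 \<le> l u y"
    and alg_bounded: "\<And>g S. g \<in> space Gm \<Longrightarrow> S \<in> {..<m} \<rightarrow> space XY \<Longrightarrow>
          0 \<le> avg_loss alg l m g S \<and> avg_loss alg l m g S \<le> C"
    and alg_regret: "\<And>g S. g \<in> space Gm \<Longrightarrow> S \<in> {..<m} \<rightarrow> space XY \<Longrightarrow>
          ereal (avg_loss alg l m g S) - (INF h\<in>H. ereal (emp_loss l m g h S)) \<le> ereal (beta g m)"
    and Q_prob: "prob_space Q" and Q_sets: "sets Q = sets (prob_algebra XY)"
    and pi1_prob: "prob_space pi1" and pi1_sets: "sets pi1 = sets Gm"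
    and meas_avg: "(\<lambda>(g, S). avg_loss alg l m g S) \<in> borel_measurable (Gm \<Otimes>\<^sub>M sampleM m XY)"
    and meas_alg: "\<And>i. i < m \<Longrightarrow>
          (\<lambda>(g, S, z). l (alg g (pref S i) (g (fst z))) (snd z))
            \<in> borel_measurable (Gm \<Otimes>\<^sub>M sampleM m XY \<Otimes>\<^sub>M XY)"
    and meas_H: "\<And>h. h \<in> H \<Longrightarrow>
          (\<lambda>(g, z). l (h (g (fst z))) (snd z)) \<in> borel_measurable (Gm \<Otimes>\<^sub>M XY)"
    and meas_inf: "(\<lambda>(g, P). INF h\<in>H. \<integral>\<^sup>+ z. ennreal (l (h (g (fst z))) (snd z)) \<partial>P)
          \<in> borel_measurable (Gm \<Otimes>\<^sub>M prob_algebra XY)"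
    and meas_beta: "(\<lambda>g. beta g m) \<in> borel_measurable Gm"
  shows "enn2ereal (meta_risk Q alg l m T pi1 eta)
     \<le> (INF rho\<in>{rho. prob_space rho \<and> sets rho = sets Gm}.
          ereal_expect rho (\<lambda>g. enn2ereal (oracle_risk Q H l g) + ereal (beta g m))
          + ereal (eta * C\<^sup>2 / 8)
          + KL rho pi1 / ereal (eta * real T))"

proof -
  interpret thm5 XY Gm H l alg beta C eta m T Q pi1
    by (rule thm5.intro) fact+
  show ?thesis
  proof (rule INF_greatest)
    fix rho assume "rho \<in> {rho. prob_space rho \<and> sets rho = sets Gm}"
    then show "enn2ereal (meta_risk Q alg l m T pi1 eta)
     \<le> ereal_expect rho (\<lambda>g. enn2ereal (oracle_risk Q H l g) + ereal (beta g m))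
          + ereal (eta * C\<^sup>2 / 8)
          + KL rho pi1 / ereal (eta * real T)"
      by (intro final_bound) auto
  qed
qed

end
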